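(* Let $\mathbb{I}=\{\mathbb{I}_1,\dots,\mathbb{I}_N\}$ be a random iterated function system on a compact metric space $(K,d)$ (see context), and write $h=\inf_{u\in\Omega}\dim_{\mathrm H}F_u$. Assume that $\mathbb{I}$ satisfies the $\mathcal{H}^h$-measure separated condition and that there exists $v=(v_1,v_2,\dots)\in\Omega$ such that $\lim_{l\to\infty}\sum_{j_1\in\mathcal{I}_{v_1},\dots,j_l\in\mathcal{I}_{v_l}}\mathrm{Lip}^-(S_{v_1,j_1}\circ\cdots\circ S_{v_l,j_l})^h=\infty.$ Then: (1) if $\inf_{u\in\Omega}\mathcal{H}^h(F_u)=0$, then for a typical $\omega\in\Omega$, $\mathcal{H}^h(F_\omega)=0$; (2) if $\inf_{u\in\Omega}\mathcal{H}^h(F_u)>0$, then for a typical $\omega\in\Omega$, $\mathcal{H}^h(F_\omega)=\infty$.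
   Context: A random iterated function system on a compact metric space $(K,d)$ is a finite set $\mathbb{I}=\{\mathbb{I}_1,\dots,\mathbb{I}_N\}$ with $\mathbb{I}_i=\{S_{i,j}\}_{j\in\mathcal{I}_i}$, $\mathcal{I}_i$ finite nonempty, each $S_{i,j}:K\to K$ a bi-Lipschitz contraction: $0<\mathrm{Lip}^-(S_{i,j})\le\mathrm{Lip}^+(S_{i,j})<1$ where $\mathrm{Lip}^-(\phi)=\inf_{x\ne y}d(\phi x,\phi y)/d(x,y)$, $\mathrm{Lip}^+(\phi)=\sup_{x\ne y}d(\phi x,\phi y)/d(x,y)$. $\Omega=\{1,\dots,N\}^{\mathbb{N}}$ and for $\omega\in\Omega$, $F_\omega=\bigcap_k\bigcup_{i_1\in\mathcal{I}_{\omega_1},\dots,i_k\in\mathcal{I}_{\omega_k}}S_{\omega_1,i_1}\circ\cdots\circ S_{\omega_k,i_k}(K)$. $\Omega$ has the metric $d_\Omega(u,v)=2^{-\min\{n:u_n\ne v_n\}}$; "typical $\omega$" means the set of such $\omega$ is residual (complement is a countable union of nowhere dense sets) in $(\Omega,d_\Omega)$. $\mathcal{H}^s$ denotes $s$-dimensional Hausdorff measure and $\dim_{\mathrm H}$ Hausdorff dimension. For a Borel measure $\mu$ on $K$, $\mathbb{I}$ satisfies the $\mu$-measure separated condition if for all $\omega\in\Omega$, $l\in\{1,\dots,N\}$ and $i\ne j$ in $\mathcal{I}_l$, $\mu(S_{l,i}(F_\omega)\cap S_{l,j}(F_\omega))=0$. *)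

theory Defs
  imports "HOL-Analysis.Analysis"
begin

text \<open>Contribution of a covering set U to the s-dimensional sum: diam(U)^s,
  with the usual conventions: the empty set contributes 0, and for s = 0 every
  nonempty set contributes 1 (so that H^0 is counting measure).\<close>
definition hterm :: "real \<Rightarrow> 'a::metric_space set \<Rightarrow> ennreal" where
  "hterm s U = (if U = {} then 0 else if s = 0 then 1 else ennreal (diameter U powr s))"

definition hausdorff_pre :: "real \<Rightarrow> real \<Rightarrow> 'a::metric_space set \<Rightarrow> ennreal" where
  "hausdorff_pre s \<delta> A =
     (INF U \<in> {U :: nat \<Rightarrow> 'a set. A \<subseteq> (\<Union>i. U i) \<and> (\<forall>i. bounded (U i) \<and> diameter (U i) \<le> \<delta>)}.
        (\<Sum>i. hterm s (U i)))"

definition hausdorff_measure :: "real \<Rightarrow> 'a::metric_space set \<Rightarrow> ennreal" where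
  "hausdorff_measure s A = (SUP \<delta> \<in> {0<..}. hausdorff_pre s \<delta> A)"

definition hausdorff_dim :: "'a::metric_space set \<Rightarrow> ereal" where
  "hausdorff_dim A = Inf {ereal s | s. s \<ge> 0 \<and> hausdorff_measure s A = 0}"

definition lip_lower :: "'a::metric_space set \<Rightarrow> ('a \<Rightarrow> 'a) \<Rightarrow> real" where
  "lip_lower K f = Inf {dist (f x) (f y) / dist x y | x y. x \<in> K \<and> y \<in> K \<and> x \<noteq> y}"

definition lip_upper :: "'a::metric_space set \<Rightarrow> ('a \<Rightarrow> 'a) \<Rightarrow> ereal" where
  "lip_upper K f = Sup {ereal (dist (f x) (f y) / dist x y) | x y. x \<in> K \<and> y \<in> K \<and> x \<noteq> y}"

text \<open>Sequences are indexed from 0: position n here is position n+1 in the paper.\<close>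
definition omega_space :: "nat \<Rightarrow> (nat \<Rightarrow> nat) set" where
  "omega_space N = {\<omega>. \<forall>n. \<omega> n \<in> {1..N}}"

definition omega_dist :: "(nat \<Rightarrow> nat) \<Rightarrow> (nat \<Rightarrow> nat) \<Rightarrow> real" where
  "omega_dist u v = (if u = v then 0 else (1/2) ^ Suc (LEAST n. u n \<noteq> v n))"

definition omega_top :: "nat \<Rightarrow> (nat \<Rightarrow> nat) topology" where
  "omega_top N = Metric_space.mtopology (omega_space N) omega_dist"

fun wcomp :: "(nat \<Rightarrow> nat \<Rightarrow> 'a \<Rightarrow> 'a) \<Rightarrow> (nat \<Rightarrow> nat) \<Rightarrow> (nat \<Rightarrow> nat) \<Rightarrow> nat \<Rightarrow> 'a \<Rightarrow> 'a" where
  "wcomp S \<omega> j 0 = id"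
| "wcomp S \<omega> j (Suc k) = wcomp S \<omega> j k \<circ> S (\<omega> k) (j k)"

definition words :: "(nat \<Rightarrow> nat set) \<Rightarrow> (nat \<Rightarrow> nat) \<Rightarrow> nat \<Rightarrow> (nat \<Rightarrow> nat) set" where
  "words I \<omega> k = Pi\<^sub>E {..<k} (\<lambda>i. I (\<omega> i))"

definition rattractor :: "'a set \<Rightarrow> (nat \<Rightarrow> nat set) \<Rightarrow> (nat \<Rightarrow> nat \<Rightarrow> 'a \<Rightarrow> 'a) \<Rightarrow> (nat \<Rightarrow> nat) \<Rightarrow> 'a set" where
  "rattractor K I S \<omega> = (\<Inter>k. \<Union>j \<in> words I \<omega> k. wcomp S \<omega> j k ` K)"

definition nowhere_dense :: "'a topology \<Rightarrow> 'a set \<Rightarrow> bool" where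
  "nowhere_dense X A \<longleftrightarrow> A \<subseteq> topspace X \<and> X interior_of (X closure_of A) = {}"

definition residual :: "'a topology \<Rightarrow> 'a set \<Rightarrow> bool" where
  "residual X A \<longleftrightarrow> A \<subseteq> topspace X \<and>
     (\<exists>B :: nat \<Rightarrow> 'a set. (\<forall>n. nowhere_dense X (B n)) \<and> topspace X - A \<subseteq> (\<Union>n. B n))"

end

theory Submission
  imports Defs
begin

section \<open>Hausdorff premeasure basics\<close>

lemma hp_le:
  assumes "A \<subseteq> (\<Union>i. U i)" "\<And>i. bounded (U i)" "\<And>i. diameter (U i) \<le> \<delta>"
  shows "hausdorff_pre s \<delta> A \<le> (\<Sum>i. hterm s (U i))"
  unfolding hausdorff_pre_def by (rule INF_lower) (use assms in auto)

lemma hp_less_ex: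
  assumes "hausdorff_pre s \<delta> A < t"
  obtains U where "A \<subseteq> (\<Union>i. U i)" "\<And>i. bounded (U i)" "\<And>i. diameter (U i) \<le> \<delta>"
    "(\<Sum>i. hterm s (U i)) < t"
  using assms unfolding hausdorff_pre_def INF_less_iff by blast

lemma hp_mono: "A \<subseteq> B \<Longrightarrow> hausdorff_pre s \<delta> A \<le> hausdorff_pre s \<delta> B"
  unfolding hausdorff_pre_def by (rule INF_superset_mono) auto

lemma hp_anti: "\<delta> \<le> \<delta>' \<Longrightarrow> hausdorff_pre s \<delta>' A \<le> hausdorff_pre s \<delta> A"
  unfolding hausdorff_pre_def by (rule INF_superset_mono) (auto intro: order_trans)

lemma hp_le_H: "0 < \<delta> \<Longrightarrow> hausdorff_pre s \<delta> A \<le> hausdorff_measure s A"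
  unfolding hausdorff_measure_def by (rule SUP_upper) auto

lemma H_mono: "A \<subseteq> B \<Longrightarrow> hausdorff_measure s A \<le> hausdorff_measure s B"
  unfolding hausdorff_measure_def by (rule SUP_mono) (auto intro: hp_mono)

lemma H_leI: "(\<And>\<delta>. 0 < \<delta> \<Longrightarrow> hausdorff_pre s \<delta> A \<le> c) \<Longrightarrow> hausdorff_measure s A \<le> c"
  unfolding hausdorff_measure_def by (rule SUP_least) auto

lemma hterm_empty[simp]: "hterm s {} = 0"
  by (simp add: hterm_def)

lemma H_empty[simp]: "hausdorff_measure s {} = 0"
proof -
  have "hausdorff_pre s \<delta> {} \<le> 0" if "0 < \<delta>" for \<delta>
    using hp_le[of "{}" "\<lambda>i. {}" \<delta> s] that by simp
  then show ?thesis by (metis H_leI le_zero_eq)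
qed

lemma diam_le:
  fixes S :: "'a::metric_space set"
  assumes "\<And>x y. x \<in> S \<Longrightarrow> y \<in> S \<Longrightarrow> dist x y \<le> d" "0 \<le> d"
  shows "diameter S \<le> d"
  using assms unfolding diameter_def by (auto intro!: cSUP_least)


lemma suminf_interleave_le:
  fixes f g :: "nat \<Rightarrow> ennreal"
  shows "(\<Sum>i. if even i then f (i div 2) else g (i div 2)) \<le> (\<Sum>i. f i) + (\<Sum>i. g i)"
proof (rule suminf_le_const)
  define F where "F i = (if even i then f (i div 2) else g (i div 2))" for i
  show "summable (\<lambda>i. if even i then f (i div 2) else g (i div 2))" by (rule summableI)
  fix n
  have eq: "(\<Sum>i<2*m. F i) = (\<Sum>i<m. f i) + (\<Sum>i<m. g i)" for m
  proof (induction m)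
    case (Suc m)
    have "2 * Suc m = Suc (Suc (2*m))" by simp
    then show ?case using Suc by (simp add: F_def ac_simps)
  qed simp
  have "(\<Sum>i<n. F i) \<le> (\<Sum>i<2*n. F i)" by (rule sum_mono2) auto
  also have "\<dots> = (\<Sum>i<n. f i) + (\<Sum>i<n. g i)" by (rule eq)
  also have "\<dots> \<le> (\<Sum>i. f i) + (\<Sum>i. g i)"
    by (intro add_mono sum_le_suminf) (auto intro: summableI)
  finally show "(\<Sum>i<n. if even i then f (i div 2) else g (i div 2)) \<le> (\<Sum>i. f i) + (\<Sum>i. g i)"
    by (simp add: F_def)
qed

lemma ennreal_lt_add: "x < top \<Longrightarrow> 0 < e \<Longrightarrow> x < x + ennreal e"
  by (cases x rule: ennreal_cases) (auto simp flip: ennreal_plus intro!: ennreal_lessI)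

lemma hp_subadd:
  "hausdorff_pre s \<delta> (A \<union> B) \<le> hausdorff_pre s \<delta> A + hausdorff_pre s \<delta> B"
proof (rule ennreal_le_epsilon)
  fix e :: real
  assume fin: "hausdorff_pre s \<delta> A + hausdorff_pre s \<delta> B < top" and e: "0 < e"
  have "hausdorff_pre s \<delta> A < hausdorff_pre s \<delta> A + ennreal (e/2)"
    using fin e by (intro ennreal_lt_add) (auto simp: top_unique)
  then obtain U where U: "A \<subseteq> (\<Union>i. U i)" "\<And>i. bounded (U i)" "\<And>i. diameter (U i) \<le> \<delta>"
    "(\<Sum>i. hterm s (U i)) < hausdorff_pre s \<delta> A + ennreal (e/2)" by (elim hp_less_ex) blast
  have "hausdorff_pre s \<delta> B < hausdorff_pre s \<delta> B + ennreal (e/2)"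
    using fin e by (intro ennreal_lt_add) (auto simp: top_unique)
  then obtain V where V: "B \<subseteq> (\<Union>i. V i)" "\<And>i. bounded (V i)" "\<And>i. diameter (V i) \<le> \<delta>"
    "(\<Sum>i. hterm s (V i)) < hausdorff_pre s \<delta> B + ennreal (e/2)" by (elim hp_less_ex) blast
  define W where "W i = (if even i then U (i div 2) else V (i div 2))" for i
  have "A \<union> B \<subseteq> (\<Union>i. W i)"
  proof
    fix x assume "x \<in> A \<union> B"
    then show "x \<in> (\<Union>i. W i)"
    proof
      assume "x \<in> A" then obtain i where "x \<in> U i" using U by auto
      then have "x \<in> W (2*i)" by (simp add: W_def)
      then show ?thesis by blast
    next
      assume "x \<in> B" then obtain i where "x \<in> V i" using V by auto
      then have "x \<in> W (2*i+1)" by (simp add: W_def)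
      then show ?thesis by blast
    qed
  qed
  moreover have "\<And>i. bounded (W i)" "\<And>i. diameter (W i) \<le> \<delta>"
    using U V by (auto simp: W_def)
  ultimately have "hausdorff_pre s \<delta> (A \<union> B) \<le> (\<Sum>i. hterm s (W i))" by (rule hp_le)
  also have "(\<Sum>i. hterm s (W i)) = (\<Sum>i. if even i then hterm s (U (i div 2)) else hterm s (V (i div 2)))"
    by (simp add: W_def if_distrib)
  also have "\<dots> \<le> (\<Sum>i. hterm s (U i)) + (\<Sum>i. hterm s (V i))" by (rule suminf_interleave_le)
  also have "\<dots> \<le> (hausdorff_pre s \<delta> A + ennreal (e/2)) + (hausdorff_pre s \<delta> B + ennreal (e/2))"
    using U(4) V(4) by (intro add_mono) auto
  also have "\<dots> = hausdorff_pre s \<delta> A + hausdorff_pre s \<delta> B + (ennreal (e/2) + ennreal (e/2))"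
    by (simp add: ac_simps)
  also have "ennreal (e/2) + ennreal (e/2) = ennreal e"
    using e by (simp flip: ennreal_plus)
  finally show "hausdorff_pre s \<delta> (A \<union> B) \<le> hausdorff_pre s \<delta> A + hausdorff_pre s \<delta> B + ennreal e" .
qed

lemma H_subadd:
  "hausdorff_measure s (A \<union> B) \<le> hausdorff_measure s A + hausdorff_measure s B"
proof (rule H_leI)
  fix \<delta> :: real assume "0 < \<delta>"
  have "hausdorff_pre s \<delta> (A \<union> B) \<le> hausdorff_pre s \<delta> A + hausdorff_pre s \<delta> B" by (rule hp_subadd)
  also have "\<dots> \<le> hausdorff_measure s A + hausdorff_measure s B"
    using \<open>0 < \<delta>\<close> by (intro add_mono hp_le_H)
  finally show "hausdorff_pre s \<delta> (A \<union> B) \<le> hausdorff_measure s A + hausdorff_measure s B" .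
qed

lemma H_UN_le:
  assumes "finite J"
  shows "hausdorff_measure s (\<Union>j\<in>J. A j) \<le> (\<Sum>j\<in>J. hausdorff_measure s (A j))"
  using assms
proof (induction J rule: finite_induct)
  case (insert x F)
  have "hausdorff_measure s (\<Union>j\<in>insert x F. A j) = hausdorff_measure s (A x \<union> (\<Union>j\<in>F. A j))" by simp
  also have "\<dots> \<le> hausdorff_measure s (A x) + hausdorff_measure s (\<Union>j\<in>F. A j)" by (rule H_subadd)
  also have "\<dots> \<le> hausdorff_measure s (A x) + (\<Sum>j\<in>F. hausdorff_measure s (A j))"
    using insert by (intro add_mono) auto
  finally show ?case using insert by simp
qed simp

lemma hp_sep:
  assumes "0 \<le> \<delta>" "\<delta> < d" "\<And>x y. x \<in> X \<Longrightarrow> y \<in> Y \<Longrightarrow> d \<le> dist x y"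
  shows "hausdorff_pre s \<delta> X + hausdorff_pre s \<delta> Y \<le> hausdorff_pre s \<delta> (X \<union> Y)"
  unfolding hausdorff_pre_def [of s \<delta> "X \<union> Y"]
proof (rule INF_greatest)
  fix U :: "nat \<Rightarrow> _ set" assume "U \<in> {U. X \<union> Y \<subseteq> (\<Union>i. U i) \<and> (\<forall>i. bounded (U i) \<and> diameter (U i) \<le> \<delta>)}"
  then have U: "X \<union> Y \<subseteq> (\<Union>i. U i)" "\<And>i. bounded (U i)" "\<And>i. diameter (U i) \<le> \<delta>" by auto
  define U1 where "U1 i = (if U i \<inter> X \<noteq> {} then U i else {})" for i :: nat
  define U2 where "U2 i = (if U i \<inter> X \<noteq> {} then {} else U i)" for i :: nat
  have "X \<subseteq> (\<Union>i. U1 i)"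
  proof
    fix x assume "x \<in> X"
    then obtain i where "x \<in> U i" using U(1) by blast
    then have "x \<in> U1 i" using \<open>x \<in> X\<close> by (auto simp: U1_def)
    then show "x \<in> (\<Union>i. U1 i)" by blast
  qed
  then have "hausdorff_pre s \<delta> X \<le> (\<Sum>i. hterm s (U1 i))"
    by (rule hp_le) (use U assms(1) in \<open>auto simp: U1_def\<close>)
  moreover have "hausdorff_pre s \<delta> Y \<le> (\<Sum>i. hterm s (U2 i))"
  proof (rule hp_le)
    show "Y \<subseteq> (\<Union>i. U2 i)"
    proof
      fix y assume y: "y \<in> Y"
      then obtain i where i: "y \<in> U i" using U by auto
      have "U i \<inter> X = {}"
      proof (rule ccontr)
        assume "U i \<inter> X \<noteq> {}"
        then obtain x where x: "x \<in> U i" "x \<in> X" by auto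
        have "dist x y \<le> diameter (U i)" using diameter_bounded_bound[OF U(2) x(1) i] .
        then show False using assms(2) assms(3)[OF x(2) y] U(3)[of i] by linarith
      qed
      then show "y \<in> (\<Union>i. U2 i)" using i by (auto simp: U2_def)
    qed
  qed (use U assms(1) in \<open>auto simp: U2_def\<close>)
  ultimately have "hausdorff_pre s \<delta> X + hausdorff_pre s \<delta> Y \<le> (\<Sum>i. hterm s (U1 i)) + (\<Sum>i. hterm s (U2 i))"
    by (rule add_mono)
  also have "\<dots> = (\<Sum>i. hterm s (U1 i) + hterm s (U2 i))"
    by (rule suminf_add) (auto intro: summableI)
  also have "\<dots> = (\<Sum>i. hterm s (U i))"
    by (rule suminf_cong) (simp add: U1_def U2_def)
  finally show "hausdorff_pre s \<delta> X + hausdorff_pre s \<delta> Y \<le> (\<Sum>i. hterm s (U i))" .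
qed

lemma hterm_mono:
  assumes "V \<noteq> {} \<Longrightarrow> U \<noteq> {}" "bounded V" "diameter V \<le> diameter U" "0 \<le> s"
  shows "hterm s V \<le> hterm s U"
  using assms diameter_ge_0[OF assms(2)]
  by (auto simp: hterm_def intro!: powr_mono2)

lemma H_lip1:
  assumes "A \<subseteq> K" "\<And>x y. x \<in> K \<Longrightarrow> y \<in> K \<Longrightarrow> dist (f x) (f y) \<le> dist x y" "0 \<le> s"
  shows "hausdorff_measure s (f ` A) \<le> hausdorff_measure s A"
  unfolding hausdorff_measure_def
proof (rule SUP_mono)
  fix \<delta> :: real assume "\<delta> \<in> {0<..}"
  have "hausdorff_pre s \<delta> (f ` A) \<le> hausdorff_pre s \<delta> A"
    unfolding hausdorff_pre_def [of s \<delta> A]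
  proof (rule INF_greatest)
    fix U :: "nat \<Rightarrow> _ set" assume "U \<in> {U. A \<subseteq> (\<Union>i. U i) \<and> (\<forall>i. bounded (U i) \<and> diameter (U i) \<le> \<delta>)}"
    then have U: "A \<subseteq> (\<Union>i. U i)" "\<And>i. bounded (U i)" "\<And>i. diameter (U i) \<le> \<delta>" by auto
    define V where "V i = f ` (U i \<inter> A)" for i
    have dV: "dist x y \<le> diameter (U i)" if xV: "x \<in> V i" and yV: "y \<in> V i" for x y i
    proof -
      obtain a where a: "a \<in> U i" "a \<in> A" "x = f a"
        using xV unfolding V_def by blast
      obtain b where b: "b \<in> U i" "b \<in> A" "y = f b"
        using yV unfolding V_def by blast
      note ab = a(1,2) b(1,2) a(3) b(3)
      then have "dist x y \<le> dist a b" using assms(1,2) by auto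
      also have "\<dots> \<le> diameter (U i)" using diameter_bounded_bound[OF U(2) ab(1,3)] .
      finally show ?thesis .
    qed
    have bV: "bounded (V i)" for i
      unfolding bounded_two_points using dV by blast
    have dV': "diameter (V i) \<le> diameter (U i)" for i
      by (rule diam_le) (use dV diameter_ge_0[OF U(2)] in auto)
    have "f ` A \<subseteq> (\<Union>i. V i)" using U(1) unfolding V_def by blast
    then have "hausdorff_pre s \<delta> (f ` A) \<le> (\<Sum>i. hterm s (V i))"
      by (rule hp_le) (use U bV dV' in \<open>auto intro: order_trans[OF dV' U(3)]\<close>)
    also have "\<dots> \<le> (\<Sum>i. hterm s (U i))"
      by (intro suminf_le hterm_mono) (use bV dV' assms(3) in \<open>auto simp: V_def intro: summableI\<close>)
    finally show "hausdorff_pre s \<delta> (f ` A) \<le> (\<Sum>i. hterm s (U i))" .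
  qed
  then show "\<exists>\<delta>'\<in>{0<..}. hausdorff_pre s \<delta> (f ` A) \<le> hausdorff_pre s \<delta>' A"
    using \<open>\<delta> \<in> {0<..}\<close> by blast
qed

lemma H_scale_lower:
  fixes f :: "'a::metric_space \<Rightarrow> 'b::metric_space" and A K :: "'a set"
  assumes L: "0 < L" and s: "0 \<le> s" and AK: "A \<subseteq> K"
    and lo: "\<And>x y. x \<in> K \<Longrightarrow> y \<in> K \<Longrightarrow> L * dist x y \<le> dist (f x) (f y)"
  shows "ennreal (L powr s) * hausdorff_measure s A \<le> hausdorff_measure s (f ` A)"
proof -
  have key: "ennreal (L powr s) * hausdorff_pre s (\<delta> / L) A \<le> hausdorff_pre s \<delta> (f ` A)" for \<delta>
  proof -
    have "ennreal (L powr s) * hausdorff_pre s (\<delta> / L) A \<le> (\<Sum>i. hterm s (U i))"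
      if U: "f ` A \<subseteq> (\<Union>i. U i)" "\<And>i. bounded (U i)" "\<And>i. diameter (U i) \<le> \<delta>"
      for U :: "nat \<Rightarrow> _ set"
    proof -
      define V where "V i = {x\<in>A. f x \<in> U i}" for i
      have dV: "dist x y \<le> diameter (U i) / L" if xy: "x \<in> V i" "y \<in> V i" for x y i
      proof -
        have "x \<in> K" "y \<in> K" "f x \<in> U i" "f y \<in> U i" using xy AK by (auto simp: V_def)
        then have "L * dist x y \<le> diameter (U i)"
          using lo[of x y] diameter_bounded_bound[OF U(2)[of i], of "f x" "f y"] by linarith
        then show ?thesis using L by (simp add: field_simps)
      qed
      have bV: "bounded (V i)" for i unfolding bounded_two_points using dV by blast
      have dV': "diameter (V i) \<le> diameter (U i) / L" for i
        by (rule diam_le) (use dV diameter_ge_0[OF U(2)] L in auto)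
      have cov: "A \<subseteq> (\<Union>i. V i)" using U(1) by (auto simp: V_def)
      have "diameter (V i) \<le> \<delta> / L" for i
        using dV'[of i] U(3)[of i] L by (meson divide_right_mono less_imp_le order_trans)
      then have "hausdorff_pre s (\<delta>/L) A \<le> (\<Sum>i. hterm s (V i))"
        by (rule hp_le[OF cov bV])
      then have "ennreal (L powr s) * hausdorff_pre s (\<delta>/L) A \<le> ennreal (L powr s) * (\<Sum>i. hterm s (V i))"
        by (rule mult_left_mono) simp
      also have "\<dots> = (\<Sum>i. ennreal (L powr s) * hterm s (V i))" by simp
      also have "\<dots> \<le> (\<Sum>i. hterm s (U i))"
      proof (rule suminf_le)
        fix i
        show "ennreal (L powr s) * hterm s (V i) \<le> hterm s (U i)"
        proof (cases "V i = {}")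
          case True thus ?thesis by simp
        next
          case Vne: False
          then have Une: "U i \<noteq> {}" by (auto simp: V_def)
          show ?thesis
          proof (cases "s = 0")
            case True thus ?thesis using Vne Une L by (simp add: hterm_def)
          next
            case False
            have "L powr s * diameter (V i) powr s = (L * diameter (V i)) powr s"
              using L diameter_ge_0[OF bV] by (simp add: powr_mult)
            also have "\<dots> \<le> diameter (U i) powr s"
              using dV'[of i] L diameter_ge_0[OF bV] s by (intro powr_mono2) (auto simp: field_simps)
            finally have "L powr s * diameter (V i) powr s \<le> diameter (U i) powr s" .
            then show ?thesis using Vne Une False
              by (simp add: hterm_def ennreal_mult[symmetric] ennreal_leI)
          qed
        qed
      qed (auto intro: summableI)
      finally show ?thesis .
    qed
    then show ?thesis unfolding hausdorff_pre_def[of s \<delta> "f ` A"]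
      by (intro INF_greatest) auto
  qed
  have "ennreal (L powr s) * hausdorff_measure s A = (SUP \<delta>\<in>{0<..}. ennreal (L powr s) * hausdorff_pre s \<delta> A)"
    unfolding hausdorff_measure_def by (rule SUP_mult_left_ennreal)
  also have "\<dots> \<le> hausdorff_measure s (f ` A)"
  proof (rule SUP_least)
    fix \<delta> :: real assume "\<delta> \<in> {0<..}"
    then have pos: "0 < \<delta> * L" using L by simp
    have "ennreal (L powr s) * hausdorff_pre s \<delta> A = ennreal (L powr s) * hausdorff_pre s ((\<delta>*L)/L) A"
      using L by simp
    also have "\<dots> \<le> hausdorff_pre s (\<delta>*L) (f ` A)" by (rule key)
    also have "\<dots> \<le> hausdorff_measure s (f ` A)" by (rule hp_le_H[OF pos])
    finally show "ennreal (L powr s) * hausdorff_pre s \<delta> A \<le> hausdorff_measure s (f ` A)" .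
  qed
  finally show ?thesis .
qed

lemma enlarge_one:
  fixes d s r b :: real
  assumes "0 \<le> d" "0 < s" "0 < r" "0 < b"
  obtains \<eta> where "0 < \<eta>" "\<eta> \<le> b" "(d + 2*\<eta>) powr s \<le> d powr s + r"
proof -
  have "((\<lambda>t. (d + 2*t) powr s) \<longlongrightarrow> (d + 2*0) powr s) (at_right (0::real))"
    using assms by (intro tendsto_powr2 tendsto_intros)
      (auto simp: eventually_at_right_field intro: exI[of _ 1])
  then have "eventually (\<lambda>t. dist ((d + 2*t) powr s) (d powr s) < r) (at_right 0)"
    using assms(3) by (auto dest: tendstoD)
  then obtain c where c: "c > 0" "\<And>t. t > 0 \<Longrightarrow> t < c \<Longrightarrow> dist ((d + 2*t) powr s) (d powr s) < r"
    unfolding eventually_at_right_field by auto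
  define \<eta> where "\<eta> = min (c/2) b"
  have "0 < \<eta>" "\<eta> \<le> b" "\<eta> < c" using c assms by (auto simp: \<eta>_def)
  moreover have "(d + 2*\<eta>) powr s \<le> d powr s + r"
    using c(2)[OF \<open>0 < \<eta>\<close> \<open>\<eta> < c\<close>] by (auto simp: dist_real_def)
  ultimately show ?thesis using that by blast
qed

lemma infdist_lessD:
  assumes "infdist x A < e" "A \<noteq> {}"
  shows "\<exists>a\<in>A. dist x a < e"
  using assms by (auto simp: infdist_notempty cINF_less_iff)

lemma enlarge:
  fixes U :: "nat \<Rightarrow> 'a::metric_space set"
  assumes U: "\<And>i. bounded (U i)" "\<And>i. diameter (U i) \<le> \<delta>" and e: "0 < e" and s: "0 \<le> s"
  obtains W where "\<And>i. open (W i)" "\<And>i. U i \<subseteq> W i" "\<And>i. bounded (W i)"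
    "\<And>i. diameter (W i) \<le> \<delta> + e"
    "(\<Sum>i. hterm s (W i)) \<le> (\<Sum>i. hterm s (U i)) + ennreal e"
proof -
  have "\<forall>i. \<exists>\<eta>. 0 < \<eta> \<and> \<eta> \<le> e/2 \<and>
     (s > 0 \<longrightarrow> (diameter (U i) + 2*\<eta>) powr s \<le> diameter (U i) powr s + e / 2^(Suc i))"
  proof
    fix i
    show "\<exists>\<eta>. 0 < \<eta> \<and> \<eta> \<le> e/2 \<and>
     (s > 0 \<longrightarrow> (diameter (U i) + 2*\<eta>) powr s \<le> diameter (U i) powr s + e / 2^(Suc i))"
    proof (cases "s > 0")
      case True
      obtain \<eta> where "0 < \<eta>" "\<eta> \<le> e/2"
        "(diameter (U i) + 2*\<eta>) powr s \<le> diameter (U i) powr s + e / 2^(Suc i)"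
        using enlarge_one[of "diameter (U i)" s "e / 2^(Suc i)" "e/2"] diameter_ge_0[OF U(1)] True e
        by auto
      then show ?thesis by blast
    next
      case False thus ?thesis using e by (intro exI[of _ "e/2"]) auto
    qed
  qed
  then obtain \<eta> where \<eta>: "\<And>i. 0 < \<eta> i" "\<And>i. \<eta> i \<le> e/2"
    "\<And>i. s > 0 \<Longrightarrow> (diameter (U i) + 2*\<eta> i) powr s \<le> diameter (U i) powr s + e / 2^(Suc i)"
    by metis
  define W where "W i = (if U i = {} then {} else {x. infdist x (U i) < \<eta> i})" for i
  have opn: "open (W i)" for i
    unfolding W_def by (auto intro!: open_Collect_less continuous_intros)
  have sub: "U i \<subseteq> W i" for i
    using \<eta>(1) by (auto simp: W_def)
  have dW: "dist x y \<le> diameter (U i) + 2 * \<eta> i" if xy: "x \<in> W i" "y \<in> W i" for x y i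
  proof -
    have ne: "U i \<noteq> {}" using xy by (auto simp: W_def split: if_splits)
    have "infdist x (U i) < \<eta> i" "infdist y (U i) < \<eta> i" using xy ne by (auto simp: W_def)
    then obtain a b where ab: "a \<in> U i" "dist x a < \<eta> i" "b \<in> U i" "dist y b < \<eta> i"
      using infdist_lessD[OF _ ne] by meson
    have "dist x y \<le> dist x a + dist a y" by (rule dist_triangle)
    moreover have "dist a y \<le> dist a b + dist b y" by (rule dist_triangle)
    ultimately have "dist x y \<le> dist x a + dist a b + dist b y" by linarith
    also have "dist a b \<le> diameter (U i)" using diameter_bounded_bound[OF U(1) ab(1,3)] .
    finally show ?thesis using ab by (simp add: dist_commute)
  qed
  have bW: "bounded (W i)" for i unfolding bounded_two_points using dW by blast
  have dW': "diameter (W i) \<le> diameter (U i) + 2 * \<eta> i" for i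
  proof (rule diam_le[OF dW])
    have "0 \<le> diameter (U i)" using diameter_ge_0[OF U(1)[of i]] .
    moreover have "0 < \<eta> i" using \<eta>(1)[of i] .
    ultimately show "0 \<le> diameter (U i) + 2 * \<eta> i" by linarith
  qed
  have dW'': "diameter (W i) \<le> \<delta> + e" for i
    using dW'[of i] U(2)[of i] \<eta>(2)[of i] by linarith
  have ht: "hterm s (W i) \<le> hterm s (U i) + ennreal (e / 2^(Suc i))" for i
  proof (cases "U i = {}")
    case True thus ?thesis by (simp add: W_def)
  next
    case False
    then have Wne: "W i \<noteq> {}" using sub by blast
    show ?thesis
    proof (cases "s = 0")
      case True thus ?thesis using False Wne by (simp add: hterm_def)
    next
      case sne: False
      then have "s > 0" using s by simp
      have "diameter (W i) powr s \<le> (diameter (U i) + 2 * \<eta> i) powr s"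
        using dW'[of i] diameter_ge_0[OF bW] s by (intro powr_mono2) auto
      also have "\<dots> \<le> diameter (U i) powr s + e / 2^(Suc i)" using \<eta>(3) \<open>s > 0\<close> .
      finally have "ennreal (diameter (W i) powr s) \<le> ennreal (diameter (U i) powr s + e / 2^(Suc i))"
        by (rule ennreal_leI)
      also have "\<dots> = ennreal (diameter (U i) powr s) + ennreal (e / 2^(Suc i))"
        by (rule ennreal_plus) (use e in auto)
      finally have "ennreal (diameter (W i) powr s) \<le> ennreal (diameter (U i) powr s) + ennreal (e / 2^(Suc i))" .
      then show ?thesis using False Wne sne by (simp add: hterm_def)
    qed
  qed
  have sums: "(\<lambda>i. e / 2^(Suc i)) sums e"
  proof -
    have "(\<lambda>i. e * (1/2)^(Suc i)) sums (e * 1)"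
      by (rule sums_mult[OF power_half_series])
    moreover have "(\<lambda>i. e * (1/2)^(Suc i)) = (\<lambda>i. e / 2^(Suc i))"
      by (rule ext) (simp add: power_one_over)
    ultimately show ?thesis by simp
  qed
  have "(\<Sum>i. hterm s (W i)) \<le> (\<Sum>i. hterm s (U i) + ennreal (e / 2^(Suc i)))"
    by (rule suminf_le[OF ht]) (auto intro: summableI)
  also have "\<dots> = (\<Sum>i. hterm s (U i)) + (\<Sum>i. ennreal (e / 2^(Suc i)))"
    by (rule suminf_add[symmetric]) (auto intro: summableI)
  also have "(\<Sum>i. ennreal (e / 2^(Suc i))) = ennreal e"
    by (rule suminf_ennreal_eq[OF _ sums]) (use e in auto)
  finally show ?thesis using that opn sub bW dW'' by blast
qed

lemma compact_closed_sep:
  fixes X Y :: "'a::metric_space set"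
  assumes "compact X" "closed Y" "X \<inter> Y = {}"
  obtains d where "0 < d" "\<And>x y. x \<in> X \<Longrightarrow> y \<in> Y \<Longrightarrow> d \<le> dist x y"
proof (cases "X = {} \<or> Y = {}")
  case True then show ?thesis using that[of 1] by auto
next
  case False
  then have XY: "X \<noteq> {}" "Y \<noteq> {}" by auto
  obtain x0 where x0: "x0 \<in> X" "\<And>x. x \<in> X \<Longrightarrow> infdist x0 Y \<le> infdist x Y"
    using continuous_attains_inf[OF assms(1) XY(1), of "\<lambda>x. infdist x Y"]
      continuous_on_infdist[OF continuous_on_id, of X Y] by auto
  have "infdist x0 Y \<noteq> 0" using in_closed_iff_infdist_zero[OF assms(2) XY(2)] x0 assms(3) by auto
  then have pos: "0 < infdist x0 Y" using infdist_nonneg[of x0 Y] by linarith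
  show ?thesis
  proof (rule that[OF pos])
    fix x y assume "x \<in> X" "y \<in> Y"
    then show "infdist x0 Y \<le> dist x y" using x0(2)[of x] infdist_le[of y Y x] by linarith
  qed
qed

lemma key_add:
  fixes A B :: "'a::metric_space set"
  assumes A: "compact A" and B: "compact B" and C: "hausdorff_measure s (A \<inter> B) = 0" and s: "0 \<le> s"
  shows "hausdorff_measure s A + hausdorff_measure s B \<le> hausdorff_measure s (A \<union> B)"
proof (rule ennreal_le_epsilon)
  fix e :: real assume e: "0 < e"
  have main: "hausdorff_pre s \<delta> A + hausdorff_pre s \<delta> B \<le> hausdorff_measure s (A \<union> B) + ennreal e"
    if \<delta>: "0 < \<delta>" for \<delta>
  proof -
    have "hausdorff_pre s (\<delta>/2) (A \<inter> B) \<le> hausdorff_measure s (A \<inter> B)" using \<delta> by (intro hp_le_H) simp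
    then have "hausdorff_pre s (\<delta>/2) (A \<inter> B) < ennreal (e/4)" using C e by simp
    then obtain U where U: "A \<inter> B \<subseteq> (\<Union>i. U i)" "\<And>i. bounded (U i)" "\<And>i. diameter (U i) \<le> \<delta>/2"
      "(\<Sum>i. hterm s (U i)) < ennreal (e/4)"
      by (elim hp_less_ex) blast
    have mpos: "0 < min (\<delta>/2) (e/4)" using \<delta> e by simp
    obtain W where W: "\<And>i. open (W i)" "\<And>i. U i \<subseteq> W i" "\<And>i. bounded (W i)"
      "\<And>i. diameter (W i) \<le> \<delta>/2 + min (\<delta>/2) (e/4)"
      "(\<Sum>i. hterm s (W i)) \<le> (\<Sum>i. hterm s (U i)) + ennreal (min (\<delta>/2) (e/4))"
      by (rule enlarge[where U=U, OF U(2,3) mpos s]) blast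
    define G where "G = (\<Union>i. W i)"
    have "open G" using W(1) by (auto simp: G_def)
    have ABG: "A \<inter> B \<subseteq> G" using U(1) W(2) unfolding G_def by blast
    have hpG: "hausdorff_pre s \<delta> G \<le> ennreal (e/2)"
    proof -
      have "diameter (W i) \<le> \<delta>" for i using W(4)[of i] by linarith
      then have "hausdorff_pre s \<delta> G \<le> (\<Sum>i. hterm s (W i))"
        by (intro hp_le W(3)) (auto simp: G_def)
      also have "\<dots> \<le> ennreal (e/4) + ennreal (e/4)"
        using W(5) U(4) by (meson add_mono ennreal_leI less_imp_le min.cobounded2 order_trans)
      also have "\<dots> = ennreal (e/2)" using e by (simp flip: ennreal_plus)
      finally show ?thesis .
    qed
    define X where "X = A - G"
    define Y where "Y = B - G"
    have cX: "compact X" "compact Y" using A B \<open>open G\<close> by (auto simp: X_def Y_def intro: compact_diff)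
    have "X \<inter> Y = {}" using ABG by (auto simp: X_def Y_def)
    then obtain d where d: "0 < d" "\<And>x y. x \<in> X \<Longrightarrow> y \<in> Y \<Longrightarrow> d \<le> dist x y"
      using compact_closed_sep[OF cX(1) compact_imp_closed[OF cX(2)]] by blast
    define \<delta>' where "\<delta>' = min \<delta> (d/2)"
    have \<delta>': "0 < \<delta>'" "\<delta>' \<le> \<delta>" "\<delta>' < d" using \<delta> d by (auto simp: \<delta>'_def)
    have "hausdorff_pre s \<delta> A \<le> hausdorff_pre s \<delta> (X \<union> G)" by (rule hp_mono) (auto simp: X_def)
    also have "\<dots> \<le> hausdorff_pre s \<delta> X + hausdorff_pre s \<delta> G" by (rule hp_subadd)
    also have "\<dots> \<le> hausdorff_pre s \<delta> X + ennreal (e/2)" using hpG by (rule add_left_mono)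
    finally have a: "hausdorff_pre s \<delta> A \<le> hausdorff_pre s \<delta> X + ennreal (e/2)" .
    have "hausdorff_pre s \<delta> B \<le> hausdorff_pre s \<delta> (Y \<union> G)" by (rule hp_mono) (auto simp: Y_def)
    also have "\<dots> \<le> hausdorff_pre s \<delta> Y + hausdorff_pre s \<delta> G" by (rule hp_subadd)
    also have "\<dots> \<le> hausdorff_pre s \<delta> Y + ennreal (e/2)" using hpG by (rule add_left_mono)
    finally have b: "hausdorff_pre s \<delta> B \<le> hausdorff_pre s \<delta> Y + ennreal (e/2)" .
    have "hausdorff_pre s \<delta> X + hausdorff_pre s \<delta> Y \<le> hausdorff_pre s \<delta>' X + hausdorff_pre s \<delta>' Y"
      by (intro add_mono hp_anti) (use \<delta>' in auto)
    also have "\<dots> \<le> hausdorff_pre s \<delta>' (X \<union> Y)" by (rule hp_sep) (use \<delta>' d in auto)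
    also have "\<dots> \<le> hausdorff_measure s (X \<union> Y)" by (rule hp_le_H) fact
    also have "\<dots> \<le> hausdorff_measure s (A \<union> B)" by (rule H_mono) (auto simp: X_def Y_def)
    finally have c: "hausdorff_pre s \<delta> X + hausdorff_pre s \<delta> Y \<le> hausdorff_measure s (A \<union> B)" .
    have "hausdorff_pre s \<delta> A + hausdorff_pre s \<delta> B \<le>
        (hausdorff_pre s \<delta> X + ennreal (e/2)) + (hausdorff_pre s \<delta> Y + ennreal (e/2))"
      using a b by (rule add_mono)
    also have "\<dots> = (hausdorff_pre s \<delta> X + hausdorff_pre s \<delta> Y) + (ennreal (e/2) + ennreal (e/2))"
      by (simp add: ac_simps)
    also have "ennreal (e/2) + ennreal (e/2) = ennreal e" using e by (simp flip: ennreal_plus)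
    finally show ?thesis using c by (meson add_right_mono order_trans)
  qed
  have ne: "{0::real<..} \<noteq> {}" by auto
  show "hausdorff_measure s A + hausdorff_measure s B \<le> hausdorff_measure s (A \<union> B) + ennreal e"
    unfolding hausdorff_measure_def[of s A] hausdorff_measure_def[of s B]
  proof (subst ennreal_SUP_add_left[OF ne, symmetric], rule SUP_least)
    fix \<delta>1 :: real assume d1: "\<delta>1 \<in> {0<..}"
    show "hausdorff_pre s \<delta>1 A + (SUP \<delta>\<in>{0<..}. hausdorff_pre s \<delta> B) \<le> hausdorff_measure s (A \<union> B) + ennreal e"
    proof (subst ennreal_SUP_add_right[OF ne], rule SUP_least)
      fix \<delta>2 :: real assume d2: "\<delta>2 \<in> {0<..}"
      have "hausdorff_pre s \<delta>1 A + hausdorff_pre s \<delta>2 B \<le>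
          hausdorff_pre s (min \<delta>1 \<delta>2) A + hausdorff_pre s (min \<delta>1 \<delta>2) B"
        by (intro add_mono hp_anti) auto
      also have "\<dots> \<le> hausdorff_measure s (A \<union> B) + ennreal e" using d1 d2 by (intro main) auto
      finally show "hausdorff_pre s \<delta>1 A + hausdorff_pre s \<delta>2 B \<le> hausdorff_measure s (A \<union> B) + ennreal e" .
    qed
  qed
qed

lemma H_null_UN:
  assumes "finite J" "\<And>j. j \<in> J \<Longrightarrow> hausdorff_measure s (A j) = 0"
  shows "hausdorff_measure s (\<Union>j\<in>J. A j) = 0"
  using H_UN_le[OF assms(1), of s A] assms(2) by simp

lemma H_finite_add:
  assumes "finite J" "\<And>j. j \<in> J \<Longrightarrow> compact (A j)"
    "\<And>i j. i \<in> J \<Longrightarrow> j \<in> J \<Longrightarrow> i \<noteq> j \<Longrightarrow> hausdorff_measure s (A i \<inter> A j) = 0" "0 \<le> s"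
  shows "(\<Sum>j\<in>J. hausdorff_measure s (A j)) \<le> hausdorff_measure s (\<Union>j\<in>J. A j)"
  using assms
proof (induction J rule: finite_induct)
  case (insert x F)
  have "(\<Sum>j\<in>insert x F. hausdorff_measure s (A j)) = hausdorff_measure s (A x) + (\<Sum>j\<in>F. hausdorff_measure s (A j))"
    using insert by simp
  also have "\<dots> \<le> hausdorff_measure s (A x) + hausdorff_measure s (\<Union>j\<in>F. A j)"
    using insert by (intro add_left_mono insert.IH) auto
  also have "\<dots> \<le> hausdorff_measure s (A x \<union> (\<Union>j\<in>F. A j))"
  proof (rule key_add)
    show "compact (A x)" using insert by auto
    show "compact (\<Union>j\<in>F. A j)" using insert by (intro compact_UN) auto
    have "A x \<inter> (\<Union>j\<in>F. A j) = (\<Union>j\<in>F. A x \<inter> A j)" by blast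
    also have "hausdorff_measure s \<dots> = 0"
      using insert by (intro H_null_UN) auto
    finally show "hausdorff_measure s (A x \<inter> (\<Union>j\<in>F. A j)) = 0" .
    show "0 \<le> s" by (rule insert.prems(3))
  qed
  also have "A x \<union> (\<Union>j\<in>F. A j) = (\<Union>j\<in>insert x F. A j)" by (simp only: UN_insert)
  finally show ?case .
next
  case empty
  show ?case by (simp only: sum.empty) (rule zero_le)
qed

lemma hp_zero_H_zero:
  assumes "hausdorff_pre s \<delta> A = 0" "0 \<le> s"
  shows "hausdorff_measure s A = 0"
proof -
  have main: "hausdorff_pre s \<delta>' A \<le> ennreal e" if d': "0 < \<delta>'" and e: "0 < e" for \<delta>' e
  proof -
    define t where "t = min e (if s > 0 then \<delta>' powr s else 1)"
    have t: "0 < t" "t \<le> e" using d' e by (auto simp: t_def)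
    have "hausdorff_pre s \<delta> A < ennreal t" using assms t by simp
    then obtain U where U: "A \<subseteq> (\<Union>i. U i)" "\<And>i. bounded (U i)" "\<And>i. diameter (U i) \<le> \<delta>"
      "(\<Sum>i. hterm s (U i)) < ennreal t"
      by (elim hp_less_ex) blast
    have dU: "diameter (U i) \<le> \<delta>'" for i
    proof (cases "U i = {}")
      case True thus ?thesis using d' by simp
    next
      case False
      have "hterm s (U i) \<le> (\<Sum>i. hterm s (U i))"
        using sum_le_suminf[of "\<lambda>i. hterm s (U i)" "{i}"] by (auto intro: summableI)
      then have ht: "hterm s (U i) < ennreal t" using U(4) by (rule le_less_trans)
      show ?thesis
      proof (cases "s > 0")
        case True
        have "ennreal (diameter (U i) powr s) < ennreal t" using ht False True by (simp add: hterm_def)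
        also have "\<dots> \<le> ennreal (\<delta>' powr s)" using True by (intro ennreal_leI) (simp add: t_def)
        finally have "diameter (U i) powr s < \<delta>' powr s"
          by (simp add: ennreal_less_iff)
        then show ?thesis
          using diameter_ge_0[OF U(2)[of i]] d' True
          by (meson less_imp_le not_le powr_mono2 order.strict_iff_not)
      next
        case False
        then have "s = 0" using assms(2) by simp
        then have "ennreal 1 < ennreal t" using ht \<open>U i \<noteq> {}\<close> by (simp add: hterm_def)
        moreover have "t \<le> 1" using \<open>s = 0\<close> by (simp add: t_def)
        ultimately show ?thesis by (simp add: ennreal_less_iff)
      qed
    qed
    have "hausdorff_pre s \<delta>' A \<le> (\<Sum>i. hterm s (U i))" by (rule hp_le[OF U(1) U(2) dU])
    also have "\<dots> \<le> ennreal e" using U(4) t by (meson ennreal_leI less_imp_le order_trans)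
    finally show ?thesis .
  qed
  have "hausdorff_pre s \<delta>' A \<le> 0" if "0 < \<delta>'" for \<delta>'
  proof (rule ennreal_le_epsilon)
    fix e :: real assume "0 < e"
    then show "hausdorff_pre s \<delta>' A \<le> 0 + ennreal e" using main[OF that] by simp
  qed
  then have "hausdorff_measure s A \<le> 0" by (rule H_leI)
  then show ?thesis by (simp only: le_zero_eq)
qed

section \<open>The sequence space\<close>

lemma omega_dist_commute: "omega_dist u v = omega_dist v u"
proof -
  have "(LEAST n. u n \<noteq> v n) = (LEAST n. v n \<noteq> u n)" by (metis)
  then show ?thesis by (auto simp: omega_dist_def)
qed

lemma omega_dist_lt: "omega_dist u v < (1/2)^n \<longleftrightarrow> (\<forall>i<n. u i = v i)"
proof (cases "u = v")
  case True then show ?thesis by (simp add: omega_dist_def)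
next
  case False
  then obtain k where k: "u k \<noteq> v k" by auto
  define L where "L = (LEAST n. u n \<noteq> v n)"
  have L: "u L \<noteq> v L" unfolding L_def using k by (rule LeastI)
  have below: "i < L \<Longrightarrow> u i = v i" for i unfolding L_def using not_less_Least by blast
  have d: "omega_dist u v = (1/2)^Suc L" using False by (simp add: omega_dist_def L_def)
  have "(1/2::real)^Suc L < (1/2)^n \<longleftrightarrow> n < Suc L" by (rule power_strict_decreasing_iff) auto
  moreover have "n \<le> L \<longleftrightarrow> (\<forall>i<n. u i = v i)"
  proof
    assume "n \<le> L" then show "\<forall>i<n. u i = v i" using below by auto
  next
    assume "\<forall>i<n. u i = v i" then show "n \<le> L" using L by (meson not_le)
  qed
  ultimately show ?thesis using d by auto
qed

lemma omega_dist_pos: "0 \<le> omega_dist u v"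
  by (simp add: omega_dist_def)

lemma omega_dist_triangle: "omega_dist u w \<le> omega_dist u v + omega_dist v w"
proof (rule ccontr)
  assume contr: "\<not> ?thesis"
  then have uw: "u \<noteq> w" by (auto simp: omega_dist_def)
  define L where "L = (LEAST n. u n \<noteq> w n)"
  obtain k where "u k \<noteq> w k" using uw by (auto simp: fun_eq_iff)
  then have L: "u L \<noteq> w L" unfolding L_def by (rule LeastI)
  have d: "omega_dist u w = (1/2)^Suc L" using uw by (simp add: omega_dist_def L_def)
  have "omega_dist u v < (1/2)^Suc L" "omega_dist v w < (1/2)^Suc L"
    using contr d omega_dist_pos[of u v] omega_dist_pos[of v w] by linarith+
  then have "u L = v L" "v L = w L" unfolding omega_dist_lt by auto
  then show False using L by simp
qed

lemma Metric_omega: "Metric_space (omega_space N) omega_dist"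
proof
  fix x y z :: "nat \<Rightarrow> nat"
  show "0 \<le> omega_dist x y" by (rule omega_dist_pos)
  show "omega_dist x y = omega_dist y x" by (rule omega_dist_commute)
  show "omega_dist x y = 0 \<longleftrightarrow> x = y" by (simp add: omega_dist_def)
  show "omega_dist x z \<le> omega_dist x y + omega_dist y z" by (rule omega_dist_triangle)
qed

definition cyl :: "nat \<Rightarrow> (nat \<Rightarrow> nat) \<Rightarrow> nat \<Rightarrow> (nat \<Rightarrow> nat) set" where
  "cyl N \<omega> n = {v \<in> omega_space N. \<forall>i<n. v i = \<omega> i}"

lemma topspace_omega: "topspace (omega_top N) = omega_space N"
  unfolding omega_top_def using Metric_space.topspace_mtopology[OF Metric_omega] .

lemma cyl_mball: "\<omega> \<in> omega_space N \<Longrightarrow>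
   cyl N \<omega> n = Metric_space.mball (omega_space N) omega_dist \<omega> ((1/2)^n)"
  unfolding cyl_def Metric_space.mball_def[OF Metric_omega] omega_dist_lt by auto

lemma cyl_open: "\<omega> \<in> omega_space N \<Longrightarrow> openin (omega_top N) (cyl N \<omega> n)"
  unfolding omega_top_def cyl_mball by (rule Metric_space.openin_mball[OF Metric_omega])

lemma pow_small:
  fixes x r :: real
  assumes "0 \<le> x" "x < 1" "0 < r"
  shows "\<exists>n0. \<forall>n\<ge>n0. x^n < r"
proof -
  have "(\<lambda>n. x^n) \<longlonglongrightarrow> 0" using assms by (intro LIMSEQ_power_zero) simp
  then have "eventually (\<lambda>n. x^n < r) sequentially" using assms(3) by (rule order_tendstoD(2))
  then show ?thesis by (simp add: eventually_sequentially)
qed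

lemma open_has_cyl:
  assumes "openin (omega_top N) U" "\<omega> \<in> U"
  shows "\<exists>n. cyl N \<omega> n \<subseteq> U"
proof -
  have "U \<subseteq> omega_space N" "\<exists>r>0. Metric_space.mball (omega_space N) omega_dist \<omega> r \<subseteq> U"
    using assms unfolding omega_top_def Metric_space.openin_mtopology[OF Metric_omega] by auto
  then obtain r where r: "r > 0" "Metric_space.mball (omega_space N) omega_dist \<omega> r \<subseteq> U" by auto
  obtain n0 where "\<forall>n\<ge>n0. (1/2::real)^n < r" using pow_small[of "1/2" r] r by auto
  then have "(1/2::real)^n0 \<le> r" by auto
  then have "cyl N \<omega> n0 \<subseteq> Metric_space.mball (omega_space N) omega_dist \<omega> r"
    using cyl_mball[of \<omega> N n0] \<open>U \<subseteq> omega_space N\<close> assms(2)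
      Metric_space.mball_subset_concentric[OF Metric_omega] by blast
  then show ?thesis using r by blast
qed

lemma nowhere_dense_crit:
  assumes "A \<subseteq> topspace X"
    "\<And>U. openin X U \<Longrightarrow> U \<noteq> {} \<Longrightarrow> \<exists>V. openin X V \<and> V \<noteq> {} \<and> V \<subseteq> U \<and> V \<inter> A = {}"
  shows "nowhere_dense X A"
  unfolding nowhere_dense_def
proof (intro conjI assms(1))
  show "X interior_of (X closure_of A) = {}"
  proof (rule ccontr)
    assume ne: "X interior_of (X closure_of A) \<noteq> {}"
    obtain V where V: "openin X V" "V \<noteq> {}" "V \<subseteq> X interior_of (X closure_of A)" "V \<inter> A = {}"
      using assms(2)[OF openin_interior_of ne] by blast
    then obtain y where "y \<in> V" by blast
    then have "y \<in> X closure_of A" using V(3) interior_of_subset[of X "X closure_of A"] by (meson subsetD)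
    then have "\<exists>z. z \<in> A \<and> z \<in> V" using V(1) \<open>y \<in> V\<close> unfolding in_closure_of by blast
    then show False using V(4) by blast
  qed
qed

lemma residual_omega:
  fixes B :: "nat \<Rightarrow> (nat \<Rightarrow> nat) set"
  assumes TO: "T \<subseteq> omega_space N"
    and cover: "omega_space N - T \<subseteq> (\<Union>k. B k)"
    and Bsub: "\<And>k. B k \<subseteq> omega_space N"
    and dense: "\<And>k \<omega> n. \<omega> \<in> omega_space N \<Longrightarrow>
       \<exists>\<omega>'\<in>omega_space N. \<exists>m\<ge>n. (\<forall>i<n. \<omega>' i = \<omega> i) \<and> (\<forall>v\<in>cyl N \<omega>' m. v \<notin> B k)"
  shows "residual (omega_top N) T"
proof -
  have nd: "nowhere_dense (omega_top N) (B k)" for k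
  proof (rule nowhere_dense_crit)
    show "B k \<subseteq> topspace (omega_top N)" using Bsub topspace_omega by auto
    fix U assume U: "openin (omega_top N) U" "U \<noteq> {}"
    then obtain \<omega> where \<omega>: "\<omega> \<in> U" by auto
    have "U \<subseteq> omega_space N" using openin_subset[OF U(1)] topspace_omega by auto
    then have \<omega>O: "\<omega> \<in> omega_space N" using \<omega> by auto
    obtain n where n: "cyl N \<omega> n \<subseteq> U" using open_has_cyl[OF U(1) \<omega>] by auto
    obtain \<omega>' m where \<omega>': "\<omega>' \<in> omega_space N" "m \<ge> n" "\<forall>i<n. \<omega>' i = \<omega> i" "\<forall>v\<in>cyl N \<omega>' m. v \<notin> B k"
      using dense[OF \<omega>O] by blast
    show "\<exists>V. openin (omega_top N) V \<and> V \<noteq> {} \<and> V \<subseteq> U \<and> V \<inter> B k = {}"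
    proof (intro exI[of _ "cyl N \<omega>' m"] conjI)
      show "openin (omega_top N) (cyl N \<omega>' m)" by (rule cyl_open[OF \<omega>'(1)])
      show "cyl N \<omega>' m \<noteq> {}" using \<omega>'(1) by (auto simp: cyl_def)
      show "cyl N \<omega>' m \<subseteq> U" using n \<omega>'(2,3) by (auto simp: cyl_def)
      show "cyl N \<omega>' m \<inter> B k = {}" using \<omega>'(4) by auto
    qed
  qed
  have *: "(\<forall>n. nowhere_dense (omega_top N) (B n)) \<and> omega_space N - T \<subseteq> (\<Union>n. B n)"
    using nd cover by simp
  show ?thesis unfolding residual_def topspace_omega
    by (rule conjI[OF TO exI[where x=B and P="\<lambda>B. (\<forall>n. nowhere_dense (omega_top N) (B n)) \<and> omega_space N - T \<subseteq> (\<Union>n. B n)", OF *]])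
qed

section \<open>Shifts, compositions, words\<close>

definition sh :: "nat \<Rightarrow> (nat \<Rightarrow> 'b) \<Rightarrow> nat \<Rightarrow> 'b" where "sh n \<omega> = (\<lambda>i. \<omega> (n + i))"

lemma sh_apply[simp]: "sh n \<omega> i = \<omega> (n + i)" by (simp add: sh_def)
lemma sh_sh[simp]: "sh a (sh b \<omega>) = sh (b + a) \<omega>" by (simp add: sh_def add.assoc)
lemma sh_0[simp]: "sh 0 \<omega> = \<omega>" by (simp add: sh_def)

lemma wcomp_cong:
  "(\<And>i. i < k \<Longrightarrow> \<omega> i = \<omega>' i) \<Longrightarrow> (\<And>i. i < k \<Longrightarrow> j i = j' i) \<Longrightarrow> wcomp S \<omega> j k = wcomp S \<omega>' j' k"
  by (induction k) auto

lemma wcomp_add: "wcomp S \<omega> j (a + b) = wcomp S \<omega> j a \<circ> wcomp S (sh a \<omega>) (sh a j) b"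
  by (induction b) (auto simp: o_assoc)

lemma wcomp_1: "wcomp S \<omega> j (Suc 0) = S (\<omega> 0) (j 0)" by simp

lemma words_cong: "(\<And>i. i < k \<Longrightarrow> \<omega> i = \<omega>' i) \<Longrightarrow> words I \<omega> k = words I \<omega>' k"
  unfolding words_def by (rule PiE_cong) auto

lemma words_D: "j \<in> words I \<omega> k \<Longrightarrow> i < k \<Longrightarrow> j i \<in> I (\<omega> i)"
  by (auto simp: words_def)

lemma restrict_words: "(\<And>i. i < k \<Longrightarrow> j i \<in> I (\<omega> i)) \<Longrightarrow> restrict j {..<k} \<in> words I \<omega> k"
  by (auto simp: words_def)

lemma finite_words:
  assumes "\<And>i. i < k \<Longrightarrow> finite (I (\<omega> i))"
  shows "finite (words I \<omega> k)"
  unfolding words_def by (rule finite_PiE) (use assms in auto)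

lemma words_ne:
  assumes "\<And>i. i < k \<Longrightarrow> I (\<omega> i) \<noteq> {}"
  shows "words I \<omega> k \<noteq> {}"
  unfolding words_def using assms by (auto simp: PiE_eq_empty_iff)

section \<open>Lipschitz constants\<close>

lemma lip_lower_bound:
  assumes "x \<in> K" "y \<in> K"
  shows "lip_lower K f * dist x y \<le> dist (f x) (f y)"
proof (cases "x = y")
  case True then show ?thesis by simp
next
  case False
  have "lip_lower K f \<le> dist (f x) (f y) / dist x y"
    unfolding lip_lower_def
    by (rule cInf_lower) (use assms False in \<open>auto intro!: bdd_belowI[of _ 0]\<close>)
  then show ?thesis using False by (simp add: field_simps)
qed

lemma lip_lower_nonneg:
  assumes "x \<in> K" "y \<in> K" "x \<noteq> y"
  shows "0 \<le> lip_lower K f"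
  unfolding lip_lower_def by (rule cInf_greatest) (use assms in auto)

lemma lip_lower_comp:
  assumes xy: "a \<in> K" "b \<in> K" "a \<noteq> b" and g: "g ` K \<subseteq> K"
  shows "lip_lower K f * lip_lower K g \<le> lip_lower K (f \<circ> g)"
  unfolding lip_lower_def[of K "f \<circ> g"]
proof (rule cInf_greatest)
  show "{dist ((f \<circ> g) x) ((f \<circ> g) y) / dist x y |x y. x \<in> K \<and> y \<in> K \<and> x \<noteq> y} \<noteq> {}"
    using xy by blast
  fix r assume "r \<in> {dist ((f \<circ> g) x) ((f \<circ> g) y) / dist x y |x y. x \<in> K \<and> y \<in> K \<and> x \<noteq> y}"
  then obtain x y where r: "r = dist (f (g x)) (f (g y)) / dist x y" "x \<in> K" "y \<in> K" "x \<noteq> y" by auto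
  have gK: "g x \<in> K" "g y \<in> K" using g r by auto
  have Lf: "0 \<le> lip_lower K f" using lip_lower_nonneg[OF xy] .
  have "lip_lower K f * lip_lower K g * dist x y \<le> lip_lower K f * dist (g x) (g y)"
    using lip_lower_bound[OF r(2,3), of g] Lf by (simp add: mult.assoc mult_left_mono)
  also have "\<dots> \<le> dist (f (g x)) (f (g y))" by (rule lip_lower_bound[OF gK])
  finally have "lip_lower K f * lip_lower K g * dist x y \<le> dist (f (g x)) (f (g y))" .
  moreover have "0 < dist x y" using r(4) by simp
  ultimately show "lip_lower K f * lip_lower K g \<le> r" using r(1) by (simp add: pos_le_divide_eq)
qed

lemma lip_lower_id:
  assumes "a \<in> K" "b \<in> K" "a \<noteq> b"
  shows "lip_lower K id = 1"
proof -
  have "{dist (id x) (id y) / dist x y |x y. x \<in> K \<and> y \<in> K \<and> x \<noteq> y} = {1}"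
    using assms by auto
  then show ?thesis by (simp add: lip_lower_def)
qed

lemma lip_upper_bound:
  assumes "x \<in> K" "y \<in> K" "lip_upper K f \<le> ereal c"
  shows "dist (f x) (f y) \<le> c * dist x y"
proof (cases "x = y")
  case True then show ?thesis by simp
next
  case False
  have "ereal (dist (f x) (f y) / dist x y) \<le> lip_upper K f"
    unfolding lip_upper_def by (rule Sup_upper) (use assms False in auto)
  then have "dist (f x) (f y) / dist x y \<le> c" using assms(3) by (meson ereal_less_eq(3) order_trans)
  then show ?thesis using False by (simp add: field_simps)
qed

locale rifs =
  fixes K :: "'a::metric_space set" and N :: nat and I :: "nat \<Rightarrow> nat set"
    and S :: "nat \<Rightarrow> nat \<Rightarrow> 'a \<Rightarrow> 'a"
  assumes K: "compact K" and N: "N \<ge> 1"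
    and I: "\<And>l. l \<in> {1..N} \<Longrightarrow> finite (I l) \<and> I l \<noteq> {}"
    and S_maps: "\<And>l i. l \<in> {1..N} \<Longrightarrow> i \<in> I l \<Longrightarrow> S l i ` K \<subseteq> K"
    and S_bilip: "\<And>l i. l \<in> {1..N} \<Longrightarrow> i \<in> I l \<Longrightarrow>
        0 < lip_lower K (S l i) \<and> ereal (lip_lower K (S l i)) \<le> lip_upper K (S l i)
        \<and> lip_upper K (S l i) < 1"
begin

abbreviation Om where "Om \<equiv> omega_space N"

definition lev where "lev \<omega> k = (\<Union>j\<in>words I \<omega> k. wcomp S \<omega> j k ` K)"

abbreviation F where "F \<omega> \<equiv> rattractor K I S \<omega>"

lemma F_lev: "F \<omega> = (\<Inter>k. lev \<omega> k)"
  by (simp add: rattractor_def lev_def)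

lemma Om_D: "\<omega> \<in> Om \<Longrightarrow> \<omega> i \<in> {1..N}"
  by (auto simp: omega_space_def)

lemma Om_sh: "\<omega> \<in> Om \<Longrightarrow> sh n \<omega> \<in> Om"
  by (auto simp: omega_space_def)

lemma two_points: obtains a b where "a \<in> K" "b \<in> K" "a \<noteq> b"
proof -
  have 1: "(1::nat) \<in> {1..N}" using N by auto
  then obtain i where i: "i \<in> I 1" using I by blast
  show ?thesis
  proof (rule ccontr)
    assume "\<not> thesis"
    then have "\<forall>a\<in>K. \<forall>b\<in>K. a = b" using that by blast
    then have E: "{ereal (dist (S 1 i x) (S 1 i y) / dist x y) |x y. x \<in> K \<and> y \<in> K \<and> x \<noteq> y} = {}" by auto
    have "lip_upper K (S 1 i) = Sup {}" unfolding lip_upper_def E ..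
    then have "lip_upper K (S 1 i) = -\<infinity>" by (simp add: bot_ereal_def)
    then show False using S_bilip[OF 1 i] by simp
  qed
qed

lemma K_ne: "K \<noteq> {}" using two_points by blast

lemma S_lower: "l \<in> {1..N} \<Longrightarrow> i \<in> I l \<Longrightarrow> 0 < lip_lower K (S l i)"
  using S_bilip by blast

lemma lam_exists:
  obtains lam :: real where "0 \<le> lam" "lam < 1"
    "\<And>l i x y. l \<in> {1..N} \<Longrightarrow> i \<in> I l \<Longrightarrow> x \<in> K \<Longrightarrow> y \<in> K \<Longrightarrow>
        dist (S l i x) (S l i y) \<le> lam * dist x y"
proof -
  define P where "P = (SIGMA l:{1..N}. I l)"
  define c where "c = (\<lambda>(l,i). real_of_ereal (lip_upper K (S l i)))"
  have finP: "finite P" unfolding P_def using I by (intro finite_SigmaI) auto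
  have 1: "(1::nat) \<in> {1..N}" using N by auto
  then obtain i0 where i0: "i0 \<in> I 1" using I by blast
  have "(1, i0) \<in> P" using 1 i0 unfolding P_def by blast
  then have neP: "P \<noteq> {}" by blast
  have cfin: "lip_upper K (S l i) = ereal (c (l,i))" "0 < c (l,i)" "c (l,i) < 1"
    if "l \<in> {1..N}" "i \<in> I l" for l i
  proof -
    have b: "0 < lip_lower K (S l i)" "ereal (lip_lower K (S l i)) \<le> lip_upper K (S l i)"
      "lip_upper K (S l i) < 1" using S_bilip[OF that] by auto
    then have "lip_upper K (S l i) \<noteq> \<infinity>" "lip_upper K (S l i) \<noteq> -\<infinity>" by auto
    then obtain r where r: "lip_upper K (S l i) = ereal r" by (cases "lip_upper K (S l i)") auto
    show "lip_upper K (S l i) = ereal (c (l,i))" using r by (simp add: c_def)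
    show "0 < c (l,i)" using r b(1,2) by (simp add: c_def)
    show "c (l,i) < 1" using r b(3) by (simp add: c_def)
  qed
  define lam where "lam = Max (c ` P)"
  have lam_ge: "c (l,i) \<le> lam" if "l \<in> {1..N}" "i \<in> I l" for l i
    unfolding lam_def using finP that by (intro Max_ge) (auto simp: P_def)
  have "lam \<in> c ` P" unfolding lam_def using finP neP by (intro Max_in) auto
  then obtain l i where li: "l \<in> {1..N}" "i \<in> I l" "lam = c (l,i)" by (auto simp: P_def)
  have "0 \<le> lam" "lam < 1" using cfin[OF li(1,2)] li(3) by auto
  moreover have "dist (S l i x) (S l i y) \<le> lam * dist x y"
    if "l \<in> {1..N}" "i \<in> I l" "x \<in> K" "y \<in> K" for l i x y
  proof (rule lip_upper_bound[OF that(3,4)])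
    show "lip_upper K (S l i) \<le> ereal lam" using cfin(1)[OF that(1,2)] lam_ge[OF that(1,2)] by simp
  qed
  ultimately show ?thesis using that by blast
qed

definition lam where "lam = (SOME c::real. 0 \<le> c \<and> c < 1 \<and> (\<forall>l i x y. l \<in> {1..N} \<longrightarrow> i \<in> I l \<longrightarrow>
   x \<in> K \<longrightarrow> y \<in> K \<longrightarrow> dist (S l i x) (S l i y) \<le> c * dist x y))"

lemma lam_props: "0 \<le> lam \<and> lam < 1 \<and> (\<forall>l i x y. l \<in> {1..N} \<longrightarrow> i \<in> I l \<longrightarrow>
   x \<in> K \<longrightarrow> y \<in> K \<longrightarrow> dist (S l i x) (S l i y) \<le> lam * dist x y)"
proof -
  obtain c :: real where c: "0 \<le> c" "c < 1"
    "\<And>l i x y. l \<in> {1..N} \<Longrightarrow> i \<in> I l \<Longrightarrow> x \<in> K \<Longrightarrow> y \<in> K \<Longrightarrow>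
        dist (S l i x) (S l i y) \<le> c * dist x y"
    by (rule lam_exists) blast
  then have "0 \<le> c \<and> c < 1 \<and> (\<forall>l i x y. l \<in> {1..N} \<longrightarrow> i \<in> I l \<longrightarrow>
   x \<in> K \<longrightarrow> y \<in> K \<longrightarrow> dist (S l i x) (S l i y) \<le> c * dist x y)" by blast
  then show ?thesis unfolding lam_def by (rule someI)
qed

lemma lam_nonneg: "0 \<le> lam" and lam_less1: "lam < 1"
  and S_lip: "l \<in> {1..N} \<Longrightarrow> i \<in> I l \<Longrightarrow> x \<in> K \<Longrightarrow> y \<in> K \<Longrightarrow> dist (S l i x) (S l i y) \<le> lam * dist x y"
  using lam_props by auto

lemma wcomp_maps:
  "\<omega> \<in> Om \<Longrightarrow> (\<And>i. i < k \<Longrightarrow> j i \<in> I (\<omega> i)) \<Longrightarrow> wcomp S \<omega> j k ` K \<subseteq> K"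
proof (induction k)
  case 0 then show ?case by simp
next
  case (Suc k)
  have "wcomp S \<omega> j (Suc k) ` K = wcomp S \<omega> j k ` (S (\<omega> k) (j k) ` K)" by (simp add: image_comp)
  also have "\<dots> \<subseteq> wcomp S \<omega> j k ` K"
    using S_maps[OF Om_D[OF Suc.prems(1)] Suc.prems(2)[of k]] by (intro image_mono) auto
  also have "\<dots> \<subseteq> K" using Suc by auto
  finally show ?case .
qed

lemma wcomp_lip:
  "\<omega> \<in> Om \<Longrightarrow> (\<And>i. i < k \<Longrightarrow> j i \<in> I (\<omega> i)) \<Longrightarrow> x \<in> K \<Longrightarrow> y \<in> K \<Longrightarrow>
    dist (wcomp S \<omega> j k x) (wcomp S \<omega> j k y) \<le> lam^k * dist x y"
proof (induction k arbitrary: x y)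
  case 0 then show ?case by simp
next
  case (Suc k)
  have l: "\<omega> k \<in> {1..N}" "j k \<in> I (\<omega> k)" using Om_D[OF Suc.prems(1)] Suc.prems(2) by auto
  have SK: "S (\<omega> k) (j k) x \<in> K" "S (\<omega> k) (j k) y \<in> K" using S_maps[OF l] Suc.prems by auto
  have "dist (wcomp S \<omega> j (Suc k) x) (wcomp S \<omega> j (Suc k) y)
      = dist (wcomp S \<omega> j k (S (\<omega> k) (j k) x)) (wcomp S \<omega> j k (S (\<omega> k) (j k) y))" by simp
  also have "\<dots> \<le> lam^k * dist (S (\<omega> k) (j k) x) (S (\<omega> k) (j k) y)"
    using Suc.IH[OF Suc.prems(1) _ SK] Suc.prems(2) by auto
  also have "\<dots> \<le> lam^k * (lam * dist x y)"
    using S_lip[OF l Suc.prems(3,4)] lam_nonneg by (intro mult_left_mono) auto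
  finally show ?case by (simp add: mult_ac)
qed

lemma wcomp_lip1:
  "\<omega> \<in> Om \<Longrightarrow> (\<And>i. i < k \<Longrightarrow> j i \<in> I (\<omega> i)) \<Longrightarrow> x \<in> K \<Longrightarrow> y \<in> K \<Longrightarrow>
    dist (wcomp S \<omega> j k x) (wcomp S \<omega> j k y) \<le> dist x y"
proof -
  assume a: "\<omega> \<in> Om" "\<And>i. i < k \<Longrightarrow> j i \<in> I (\<omega> i)" "x \<in> K" "y \<in> K"
  have "lam^k \<le> 1" using lam_nonneg lam_less1 by (intro power_le_one) auto
  then have "lam^k * dist x y \<le> 1 * dist x y" by (intro mult_right_mono) auto
  then show ?thesis using wcomp_lip[where k=k, OF a] by linarith
qed

lemma wcomp_lower:
  "\<omega> \<in> Om \<Longrightarrow> (\<And>i. i < k \<Longrightarrow> j i \<in> I (\<omega> i)) \<Longrightarrow> 0 < lip_lower K (wcomp S \<omega> j k)"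
proof (induction k)
  case 0
  obtain a b where "a \<in> K" "b \<in> K" "a \<noteq> b" by (rule two_points)
  then have "lip_lower K id = 1" by (rule lip_lower_id)
  then show ?case by (simp add: id_def)
next
  case (Suc k)
  obtain a b where ab: "a \<in> K" "b \<in> K" "a \<noteq> b" by (rule two_points)
  have l: "\<omega> k \<in> {1..N}" "j k \<in> I (\<omega> k)" using Om_D[OF Suc.prems(1)] Suc.prems(2) by auto
  have "0 < lip_lower K (wcomp S \<omega> j k) * lip_lower K (S (\<omega> k) (j k))"
    using Suc S_lower[OF l] by auto
  also have "\<dots> \<le> lip_lower K (wcomp S \<omega> j k \<circ> S (\<omega> k) (j k))"
    by (rule lip_lower_comp[OF ab S_maps[OF l]])
  also have "wcomp S \<omega> j k \<circ> S (\<omega> k) (j k) = wcomp S \<omega> j (Suc k)" by simp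
  finally show ?case .
qed

lemma wcomp_inj:
  assumes "\<omega> \<in> Om" "\<And>i. i < k \<Longrightarrow> j i \<in> I (\<omega> i)"
  shows "inj_on (wcomp S \<omega> j k) K"
proof (rule inj_onI)
  fix x y assume xy: "x \<in> K" "y \<in> K" "wcomp S \<omega> j k x = wcomp S \<omega> j k y"
  have "lip_lower K (wcomp S \<omega> j k) * dist x y \<le> 0"
    using lip_lower_bound[OF xy(1,2), of "wcomp S \<omega> j k"] xy(3) by simp
  then show "x = y" using wcomp_lower[where k=k, OF assms]
    by (simp add: mult_le_0_iff)
qed

lemma wcomp_cont:
  assumes "\<omega> \<in> Om" "\<And>i. i < k \<Longrightarrow> j i \<in> I (\<omega> i)"
  shows "continuous_on K (wcomp S \<omega> j k)"
  unfolding continuous_on_iff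
proof (intro ballI allI impI)
  fix x and e :: real assume x: "x \<in> K" and e: "0 < e"
  show "\<exists>d>0. \<forall>x'\<in>K. dist x' x < d \<longrightarrow> dist (wcomp S \<omega> j k x') (wcomp S \<omega> j k x) < e"
  proof (intro exI[of _ e] conjI ballI impI)
    fix x' assume "x' \<in> K" "dist x' x < e"
    then show "dist (wcomp S \<omega> j k x') (wcomp S \<omega> j k x) < e"
      using wcomp_lip1[where k=k, OF assms \<open>x' \<in> K\<close> x] by linarith
  qed (rule e)
qed

end

context rifs
begin

lemma words_fin: "\<omega> \<in> Om \<Longrightarrow> finite (words I \<omega> k)"
  by (rule finite_words) (use I Om_D in blast)

lemma words_nonempty: "\<omega> \<in> Om \<Longrightarrow> words I \<omega> k \<noteq> {}"
  by (rule words_ne) (use I Om_D in blast)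

lemma lev_sub: "\<omega> \<in> Om \<Longrightarrow> lev \<omega> k \<subseteq> K"
  unfolding lev_def using wcomp_maps words_D by blast

lemma lev_compact: "\<omega> \<in> Om \<Longrightarrow> compact (lev \<omega> k)"
  unfolding lev_def
  by (intro compact_UN words_fin compact_continuous_image wcomp_cont K) (auto dest: words_D)

lemma lev_ne: "\<omega> \<in> Om \<Longrightarrow> lev \<omega> k \<noteq> {}"
  unfolding lev_def using words_nonempty K_ne by blast

lemma lev_0: "lev \<omega> 0 = K"
  by (simp add: lev_def words_def)

lemma lev_Suc: assumes "\<omega> \<in> Om" shows "lev \<omega> (Suc k) \<subseteq> lev \<omega> k"
proof
  fix x assume "x \<in> lev \<omega> (Suc k)"
  then obtain j z where jz: "j \<in> words I \<omega> (Suc k)" "z \<in> K" "x = wcomp S \<omega> j (Suc k) z"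
    unfolding lev_def by blast
  have l: "\<omega> k \<in> {1..N}" "j k \<in> I (\<omega> k)" using Om_D[OF assms] words_D[OF jz(1)] by auto
  define j' where "j' = restrict j {..<k}"
  have j': "j' \<in> words I \<omega> k" unfolding j'_def by (rule restrict_words) (use words_D[OF jz(1)] in auto)
  have eq: "wcomp S \<omega> j' k = wcomp S \<omega> j k" by (rule wcomp_cong) (auto simp: j'_def)
  have "S (\<omega> k) (j k) z \<in> K" using S_maps[OF l] jz(2) by auto
  moreover have "x = wcomp S \<omega> j' k (S (\<omega> k) (j k) z)" using jz(3) eq by simp
  ultimately show "x \<in> lev \<omega> k" using j' unfolding lev_def by blast
qed

lemma lev_anti: "\<omega> \<in> Om \<Longrightarrow> k \<le> k' \<Longrightarrow> lev \<omega> k' \<subseteq> lev \<omega> k"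
  using lift_Suc_antimono_le[of "lev \<omega>"] lev_Suc by blast

lemma F_sub_lev: "F \<omega> \<subseteq> lev \<omega> k"
  unfolding F_lev by blast

lemma F_sub: "F \<omega> \<subseteq> K"
  using F_sub_lev[of \<omega> 0] lev_0 by simp

lemma F_compact: assumes "\<omega> \<in> Om" shows "compact (F \<omega>)"
proof -
  have "F \<omega> = K \<inter> (\<Inter>k. lev \<omega> k)" using F_sub unfolding F_lev by blast
  also have "compact \<dots>"
    by (rule compact_Int_closed[OF K]) (use lev_compact[OF assms] compact_imp_closed in blast)
  finally show ?thesis .
qed

lemma F_ne: assumes "\<omega> \<in> Om" shows "F \<omega> \<noteq> {}"
proof -
  have "K \<inter> (\<Inter>k\<in>UNIV. lev \<omega> k) \<noteq> {}"
  proof (rule compact_imp_fip_image[OF K])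
    show "closed (lev \<omega> k)" for k using lev_compact[OF assms] compact_imp_closed by blast
    fix J :: "nat set" assume J: "finite J" "J \<subseteq> UNIV"
    show "K \<inter> (\<Inter>k\<in>J. lev \<omega> k) \<noteq> {}"
    proof (cases "J = {}")
      case True then show ?thesis using K_ne by simp
    next
      case False
      have "lev \<omega> (Max J) \<subseteq> K \<inter> (\<Inter>k\<in>J. lev \<omega> k)"
        using lev_sub[OF assms] lev_anti[OF assms] Max_ge[OF J(1)] by blast
      then show ?thesis using lev_ne[OF assms] by blast
    qed
  qed
  then show ?thesis unfolding F_lev by blast
qed

lemma F_selfsim_lower:
  assumes \<omega>: "\<omega> \<in> Om" and j: "\<And>i. i < n \<Longrightarrow> j i \<in> I (\<omega> i)"
  shows "wcomp S \<omega> j n ` F (sh n \<omega>) \<subseteq> F \<omega>"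
proof
  fix y assume "y \<in> wcomp S \<omega> j n ` F (sh n \<omega>)"
  then obtain x where x: "x \<in> F (sh n \<omega>)" "y = wcomp S \<omega> j n x" by blast
  show "y \<in> F \<omega>" unfolding F_lev
  proof (intro InterI, clarify)
    fix k
    have "x \<in> lev (sh n \<omega>) k" using x(1) F_sub_lev by blast
    then obtain j' z where j'z: "j' \<in> words I (sh n \<omega>) k" "z \<in> K" "x = wcomp S (sh n \<omega>) j' k z"
      unfolding lev_def by blast
    define J where "J = restrict (\<lambda>i. if i < n then j i else j' (i - n)) {..<n+k}"
    have J: "J \<in> words I \<omega> (n+k)"
      unfolding J_def
    proof (rule restrict_words)
      fix i assume "i < n + k"
      show "(if i < n then j i else j' (i - n)) \<in> I (\<omega> i)"
      proof (cases "i < n")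
        case True then show ?thesis using j by simp
      next
        case False
        then have "i - n < k" using \<open>i < n + k\<close> by simp
        then have "j' (i - n) \<in> I (sh n \<omega> (i - n))" using words_D[OF j'z(1)] by blast
        then show ?thesis using False by simp
      qed
    qed
    have "wcomp S \<omega> J (n+k) = wcomp S \<omega> J n \<circ> wcomp S (sh n \<omega>) (sh n J) k" by (rule wcomp_add)
    also have "wcomp S \<omega> J n = wcomp S \<omega> j n" by (rule wcomp_cong) (auto simp: J_def)
    also have "wcomp S (sh n \<omega>) (sh n J) k = wcomp S (sh n \<omega>) j' k" by (rule wcomp_cong) (auto simp: J_def)
    finally have "y = wcomp S \<omega> J (n+k) z" using x(2) j'z(3) by simp
    then have "y \<in> lev \<omega> (n+k)" using J j'z(2) unfolding lev_def by blast
    then show "y \<in> lev \<omega> k" using lev_anti[OF \<omega>, of k "n+k"] by auto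
  qed
qed

lemma F_selfsim_upper:
  assumes \<omega>: "\<omega> \<in> Om"
  shows "F \<omega> \<subseteq> (\<Union>j\<in>words I \<omega> n. wcomp S \<omega> j n ` F (sh n \<omega>))"
proof
  fix x assume x: "x \<in> F \<omega>"
  let ?W = "words I \<omega> n"
  have key: "\<exists>j\<in>?W. \<exists>y\<in>lev (sh n \<omega>) k. x = wcomp S \<omega> j n y" for k
  proof -
    have "x \<in> lev \<omega> (n+k)" using x F_sub_lev by blast
    then obtain J z where Jz: "J \<in> words I \<omega> (n+k)" "z \<in> K" "x = wcomp S \<omega> J (n+k) z"
      unfolding lev_def by blast
    define j1 where "j1 = restrict J {..<n}"
    have j1: "j1 \<in> ?W" unfolding j1_def by (rule restrict_words) (use words_D[OF Jz(1)] in auto)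
    define j2 where "j2 = restrict (sh n J) {..<k}"
    have j2: "j2 \<in> words I (sh n \<omega>) k" unfolding j2_def
      by (rule restrict_words) (use words_D[OF Jz(1)] in auto)
    have "wcomp S \<omega> J (n+k) = wcomp S \<omega> J n \<circ> wcomp S (sh n \<omega>) (sh n J) k" by (rule wcomp_add)
    also have "wcomp S \<omega> J n = wcomp S \<omega> j1 n" by (rule wcomp_cong) (auto simp: j1_def)
    also have "wcomp S (sh n \<omega>) (sh n J) k = wcomp S (sh n \<omega>) j2 k" by (rule wcomp_cong) (auto simp: j2_def)
    finally have "x = wcomp S \<omega> j1 n (wcomp S (sh n \<omega>) j2 k z)" using Jz(3) by simp
    moreover have "wcomp S (sh n \<omega>) j2 k z \<in> lev (sh n \<omega>) k" using j2 Jz(2) unfolding lev_def by blast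
    ultimately show ?thesis using j1 by blast
  qed
  show "x \<in> (\<Union>j\<in>?W. wcomp S \<omega> j n ` F (sh n \<omega>))"
  proof (rule ccontr)
    assume nx: "x \<notin> (\<Union>j\<in>?W. wcomp S \<omega> j n ` F (sh n \<omega>))"
    have "\<forall>j\<in>?W. \<exists>k. \<forall>y\<in>lev (sh n \<omega>) k. x \<noteq> wcomp S \<omega> j n y"
    proof
      fix j assume j: "j \<in> ?W"
      show "\<exists>k. \<forall>y\<in>lev (sh n \<omega>) k. x \<noteq> wcomp S \<omega> j n y"
      proof (cases "\<exists>y\<in>K. x = wcomp S \<omega> j n y")
        case False then show ?thesis using lev_sub[OF Om_sh[OF \<omega>]] by blast
      next
        case True
        then obtain y where y: "y \<in> K" "x = wcomp S \<omega> j n y" by blast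
        then have "y \<notin> F (sh n \<omega>)" using nx j by blast
        then obtain k where k: "y \<notin> lev (sh n \<omega>) k" unfolding F_lev by blast
        have inj: "inj_on (wcomp S \<omega> j n) K" by (rule wcomp_inj[where k=n, OF \<omega> words_D[OF j]])
        have "\<forall>y'\<in>lev (sh n \<omega>) k. x \<noteq> wcomp S \<omega> j n y'"
        proof (intro ballI notI)
          fix y' assume y': "y' \<in> lev (sh n \<omega>) k" "x = wcomp S \<omega> j n y'"
          have "y' \<in> K" using y'(1) lev_sub[OF Om_sh[OF \<omega>]] by blast
          then have "y' = y" using inj y y'(2) by (auto simp: inj_on_def)
          then show False using k y'(1) by simp
        qed
        then show ?thesis by blast
      qed
    qed
    then obtain kf where kf: "\<And>j. j \<in> ?W \<Longrightarrow> \<forall>y\<in>lev (sh n \<omega>) (kf j). x \<noteq> wcomp S \<omega> j n y"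
      by metis
    define k where "k = Max (kf ` ?W)"
    obtain j y where jy: "j \<in> ?W" "y \<in> lev (sh n \<omega>) k" "x = wcomp S \<omega> j n y" using key by blast
    have "kf j \<le> k" unfolding k_def using jy(1) words_fin[OF \<omega>] by (intro Max_ge) auto
    then have "y \<in> lev (sh n \<omega>) (kf j)" using lev_anti[OF Om_sh[OF \<omega>]] jy(2) by blast
    then show False using kf[OF jy(1)] jy(3) by blast
  qed
qed

lemma piece_meets:
  assumes "\<omega> \<in> Om" "j \<in> words I \<omega> m"
  shows "\<exists>y\<in>F \<omega>. y \<in> wcomp S \<omega> j m ` K"
proof -
  obtain u where u: "u \<in> F (sh m \<omega>)" using F_ne[OF Om_sh[OF assms(1)]] by blast
  have "wcomp S \<omega> j m u \<in> F \<omega>" using F_selfsim_lower[where n=m, OF assms(1) words_D[OF assms(2)]] u by blast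
  moreover have "u \<in> K" using u F_sub by blast
  ultimately show ?thesis by blast
qed

lemma piece_diam:
  assumes "\<omega> \<in> Om" "j \<in> words I \<omega> m" "x \<in> wcomp S \<omega> j m ` K" "y \<in> wcomp S \<omega> j m ` K"
  shows "dist x y \<le> lam^m * diameter K"
proof -
  obtain a b where ab: "a \<in> K" "b \<in> K" "x = wcomp S \<omega> j m a" "y = wcomp S \<omega> j m b" using assms(3,4) by blast
  have "dist x y \<le> lam^m * dist a b" using wcomp_lip[where k=m, OF assms(1) words_D[OF assms(2)] ab(1,2)] ab(3,4) by simp
  also have "\<dots> \<le> lam^m * diameter K"
    using diameter_bounded_bound[OF compact_imp_bounded[OF K] ab(1,2)] lam_nonneg
    by (intro mult_left_mono) auto
  finally show ?thesis .
qed

lemma lev_agree: "(\<And>i. i < m \<Longrightarrow> v i = \<omega> i) \<Longrightarrow> lev v m = lev \<omega> m"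
proof -
  assume a: "\<And>i. i < m \<Longrightarrow> v i = \<omega> i"
  have "words I v m = words I \<omega> m" by (rule words_cong) (use a in auto)
  moreover have "wcomp S v j m = wcomp S \<omega> j m" for j by (rule wcomp_cong) (use a in auto)
  ultimately show ?thesis unfolding lev_def by simp
qed

end

context rifs
begin

lemma H_upper:
  assumes \<omega>: "\<omega> \<in> Om" and h: "0 \<le> h"
  shows "hausdorff_measure h (F \<omega>) \<le> of_nat (card (words I \<omega> n)) * hausdorff_measure h (F (sh n \<omega>))"
proof -
  let ?W = "words I \<omega> n"
  have "hausdorff_measure h (F \<omega>) \<le> hausdorff_measure h (\<Union>j\<in>?W. wcomp S \<omega> j n ` F (sh n \<omega>))"
    by (rule H_mono[OF F_selfsim_upper[OF \<omega>]])
  also have "\<dots> \<le> (\<Sum>j\<in>?W. hausdorff_measure h (wcomp S \<omega> j n ` F (sh n \<omega>)))"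
    by (rule H_UN_le[OF words_fin[OF \<omega>]])
  also have "\<dots> \<le> (\<Sum>j\<in>?W. hausdorff_measure h (F (sh n \<omega>)))"
  proof (rule sum_mono)
    fix j assume j: "j \<in> ?W"
    show "hausdorff_measure h (wcomp S \<omega> j n ` F (sh n \<omega>)) \<le> hausdorff_measure h (F (sh n \<omega>))"
      by (rule H_lip1[OF F_sub _ h]) (rule wcomp_lip1[where k=n, OF \<omega> words_D[OF j]])
  qed
  also have "\<dots> = of_nat (card ?W) * hausdorff_measure h (F (sh n \<omega>))" by simp
  finally show ?thesis .
qed

lemma wcomp_split:
  assumes "m < n"
  shows "wcomp S \<omega> J n = wcomp S \<omega> J m \<circ> S (\<omega> m) (J m) \<circ> wcomp S (sh (Suc m) \<omega>) (sh (Suc m) J) (n - Suc m)"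
proof -
  have n: "n = m + (1 + (n - Suc m))" using assms by simp
  have "wcomp S \<omega> J n = wcomp S \<omega> J m \<circ> wcomp S (sh m \<omega>) (sh m J) (1 + (n - Suc m))"
    by (subst n, rule wcomp_add)
  also have "wcomp S (sh m \<omega>) (sh m J) (1 + (n - Suc m)) =
      wcomp S (sh m \<omega>) (sh m J) 1 \<circ> wcomp S (sh 1 (sh m \<omega>)) (sh 1 (sh m J)) (n - Suc m)"
    by (rule wcomp_add)
  also have "wcomp S (sh m \<omega>) (sh m J) 1 = S (\<omega> m) (J m)" by simp
  also have "sh 1 (sh m \<omega>) = sh (Suc m) \<omega>" by simp
  also have "sh 1 (sh m J) = sh (Suc m) J" by simp
  finally show ?thesis by (simp only: comp_assoc)
qed

lemma pieces_null:
  assumes \<omega>: "\<omega> \<in> Om" and j: "j \<in> words I \<omega> n" and j': "j' \<in> words I \<omega> n" and jj: "j \<noteq> j'"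
    and h: "0 \<le> h"
    and sep: "\<And>\<omega> l i j. \<omega> \<in> Om \<Longrightarrow> l \<in> {1..N} \<Longrightarrow> i \<in> I l \<Longrightarrow> j \<in> I l \<Longrightarrow> i \<noteq> j \<Longrightarrow>
        hausdorff_measure h (S l i ` F \<omega> \<inter> S l j ` F \<omega>) = 0"
  shows "hausdorff_measure h (wcomp S \<omega> j n ` F (sh n \<omega>) \<inter> wcomp S \<omega> j' n ` F (sh n \<omega>)) = 0"
proof -
  have ex: "\<exists>i. i < n \<and> j i \<noteq> j' i"
  proof (rule ccontr)
    assume "\<not> ?thesis"
    then have "j = j'" using j j' unfolding words_def
      by (intro extensionalityI[of _ "{..<n}"]) (auto simp: PiE_iff)
    then show False using jj by simp
  qed
  define m where "m = (LEAST i. i < n \<and> j i \<noteq> j' i)"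
  have m: "m < n" "j m \<noteq> j' m" using LeastI_ex[OF ex] unfolding m_def by auto
  have below: "j i = j' i" if "i < m" for i
    using not_less_Least[of i "\<lambda>i. i < n \<and> j i \<noteq> j' i"] m(1) that unfolding m_def by auto
  define r where "r = n - Suc m"
  define l where "l = \<omega> m"
  have l: "l \<in> {1..N}" using Om_D[OF \<omega>] by (simp add: l_def)
  have a: "j m \<in> I l" "j' m \<in> I l" using words_D[OF j m(1)] words_D[OF j' m(1)] by (auto simp: l_def)
  define P where "P = wcomp S \<omega> j m"
  have P': "wcomp S \<omega> j' m = P" unfolding P_def by (rule wcomp_cong) (use below in auto)
  have Pw: "\<And>i. i < m \<Longrightarrow> j i \<in> I (\<omega> i)" using words_D[OF j] m(1) by auto
  define \<omega>2 where "\<omega>2 = sh (Suc m) \<omega>"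
  have \<omega>2: "\<omega>2 \<in> Om" using Om_sh[OF \<omega>] by (simp add: \<omega>2_def)
  define G where "G = F \<omega>2"
  have R: "wcomp S \<omega>2 (sh (Suc m) J) r ` F (sh n \<omega>) \<subseteq> G" if J: "J \<in> words I \<omega> n" for J
  proof -
    have "wcomp S \<omega>2 (sh (Suc m) J) r ` F (sh r \<omega>2) \<subseteq> F \<omega>2"
    proof (rule F_selfsim_lower[OF \<omega>2])
      fix i assume "i < r"
      then have "Suc m + i < n" using m(1) by (simp add: r_def)
      then show "sh (Suc m) J i \<in> I (\<omega>2 i)" using words_D[OF J] by (simp add: \<omega>2_def)
    qed
    moreover have "sh r \<omega>2 = sh n \<omega>" using m(1) by (simp add: \<omega>2_def r_def)
    ultimately show ?thesis by (simp add: G_def)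
  qed
  have img: "wcomp S \<omega> J n ` F (sh n \<omega>) \<subseteq> wcomp S \<omega> J m ` (S l (J m) ` G)" if J: "J \<in> words I \<omega> n" for J
  proof -
    have "wcomp S \<omega> J n ` F (sh n \<omega>) = wcomp S \<omega> J m ` (S l (J m) ` (wcomp S \<omega>2 (sh (Suc m) J) r ` F (sh n \<omega>)))"
      unfolding wcomp_split[OF m(1), of \<omega> J] by (simp add: image_comp l_def \<omega>2_def r_def)
    also have "\<dots> \<subseteq> wcomp S \<omega> J m ` (S l (J m) ` G)" using R[OF J] by (intro image_mono) auto
    finally show ?thesis .
  qed
  have GK: "G \<subseteq> K" unfolding G_def by (rule F_sub)
  have SaK: "S l (j m) ` G \<subseteq> K" "S l (j' m) ` G \<subseteq> K"
    using image_mono[OF GK, of "S l (j m)"] image_mono[OF GK, of "S l (j' m)"] S_maps[OF l a(1)] S_maps[OF l a(2)]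
    by (auto simp del: image_subset_iff)
  have inj: "inj_on P K" unfolding P_def by (rule wcomp_inj[where k=m, OF \<omega> Pw])
  have sub: "wcomp S \<omega> j n ` F (sh n \<omega>) \<inter> wcomp S \<omega> j' n ` F (sh n \<omega>) \<subseteq> P ` (S l (j m) ` G \<inter> S l (j' m) ` G)"
  proof
    fix z assume z: "z \<in> wcomp S \<omega> j n ` F (sh n \<omega>) \<inter> wcomp S \<omega> j' n ` F (sh n \<omega>)"
    have z1: "z \<in> P ` (S l (j m) ` G)" using z img[OF j] unfolding P_def by blast
    have z2: "z \<in> P ` (S l (j' m) ` G)" using z img[OF j'] unfolding P' by blast
    obtain u where u: "u \<in> S l (j m) ` G" "z = P u" using z1 by (rule imageE) auto
    obtain u' where u': "u' \<in> S l (j' m) ` G" "z = P u'" using z2 by (rule imageE) auto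
    have "u \<in> K" "u' \<in> K" using u(1) u'(1) SaK by blast+
    then have "u = u'" using inj_onD[OF inj] u(2) u'(2) by metis
    then show "z \<in> P ` (S l (j m) ` G \<inter> S l (j' m) ` G)" using u u' by blast
  qed
  have "hausdorff_measure h (wcomp S \<omega> j n ` F (sh n \<omega>) \<inter> wcomp S \<omega> j' n ` F (sh n \<omega>))
      \<le> hausdorff_measure h (P ` (S l (j m) ` G \<inter> S l (j' m) ` G))" by (rule H_mono[OF sub])
  also have "\<dots> \<le> hausdorff_measure h (S l (j m) ` G \<inter> S l (j' m) ` G)"
    unfolding P_def
    by (rule H_lip1[of _ K _ h]) (use SaK wcomp_lip1[where k=m, OF \<omega> Pw] h in auto)
  also have "\<dots> = 0" unfolding G_def by (rule sep[OF \<omega>2 l a m(2)])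
  finally show ?thesis by simp
qed

lemma H_lower:
  assumes \<omega>: "\<omega> \<in> Om" and h: "0 \<le> h"
    and sep: "\<And>\<omega> l i j. \<omega> \<in> Om \<Longrightarrow> l \<in> {1..N} \<Longrightarrow> i \<in> I l \<Longrightarrow> j \<in> I l \<Longrightarrow> i \<noteq> j \<Longrightarrow>
        hausdorff_measure h (S l i ` F \<omega> \<inter> S l j ` F \<omega>) = 0"
  shows "(\<Sum>j\<in>words I \<omega> n. ennreal (lip_lower K (wcomp S \<omega> j n) powr h)) * hausdorff_measure h (F (sh n \<omega>))
     \<le> hausdorff_measure h (F \<omega>)"
proof -
  let ?W = "words I \<omega> n"
  let ?F = "F (sh n \<omega>)"
  have "(\<Sum>j\<in>?W. ennreal (lip_lower K (wcomp S \<omega> j n) powr h)) * hausdorff_measure h ?F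
      = (\<Sum>j\<in>?W. ennreal (lip_lower K (wcomp S \<omega> j n) powr h) * hausdorff_measure h ?F)"
    by (rule sum_distrib_right)
  also have "\<dots> \<le> (\<Sum>j\<in>?W. hausdorff_measure h (wcomp S \<omega> j n ` ?F))"
  proof (rule sum_mono)
    fix j assume j: "j \<in> ?W"
    show "ennreal (lip_lower K (wcomp S \<omega> j n) powr h) * hausdorff_measure h ?F
        \<le> hausdorff_measure h (wcomp S \<omega> j n ` ?F)"
      by (rule H_scale_lower[OF wcomp_lower[where k=n, OF \<omega> words_D[OF j]] h F_sub lip_lower_bound])
  qed
  also have "\<dots> \<le> hausdorff_measure h (\<Union>j\<in>?W. wcomp S \<omega> j n ` ?F)"
  proof (rule H_finite_add[OF words_fin[OF \<omega>] _ _ h])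
    fix j assume j: "j \<in> ?W"
    show "compact (wcomp S \<omega> j n ` ?F)"
      by (rule compact_continuous_image[OF continuous_on_subset[OF wcomp_cont[where k=n, OF \<omega> words_D[OF j]] F_sub]
            F_compact[OF Om_sh[OF \<omega>]]])
  next
    fix j j' assume "j \<in> ?W" "j' \<in> ?W" "j \<noteq> j'"
    then show "hausdorff_measure h (wcomp S \<omega> j n ` ?F \<inter> wcomp S \<omega> j' n ` ?F) = 0"
      by (rule pieces_null[OF \<omega> _ _ _ h sep])
  qed
  also have "\<dots> \<le> hausdorff_measure h (F \<omega>)"
    by (rule H_mono) (use F_selfsim_lower[OF \<omega>] words_D in blast)
  finally show ?thesis .
qed

end

context rifs
begin

definition pre where "pre \<omega> n u = (\<lambda>i. if i < n then \<omega> i else u (i - n))"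

lemma pre_Om: "\<omega> \<in> Om \<Longrightarrow> u \<in> Om \<Longrightarrow> pre \<omega> n u \<in> Om"
  by (auto simp: pre_def omega_space_def)

lemma pre_sh: "sh n (pre \<omega> n u) = u"
  by (rule ext) (simp add: pre_def)

lemma pre_below: "i < n \<Longrightarrow> pre \<omega> n u i = \<omega> i"
  by (simp add: pre_def)

lemma part1:
  assumes h: "0 \<le> h" and c0: "(INF u\<in>Om. hausdorff_measure h (F u)) = 0"
  shows "residual (omega_top N) {\<omega> \<in> Om. hausdorff_measure h (F \<omega>) = 0}"
proof -
  define B where "B k = {\<omega> \<in> Om. \<not> hausdorff_pre h 2 (F \<omega>) < ennreal (1 / real (Suc k))}" for k
  show ?thesis
  proof (rule residual_omega[of _ N B])
    show "{\<omega> \<in> Om. hausdorff_measure h (F \<omega>) = 0} \<subseteq> Om" by blast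
    show "B k \<subseteq> Om" for k by (auto simp: B_def)
    show "Om - {\<omega> \<in> Om. hausdorff_measure h (F \<omega>) = 0} \<subseteq> (\<Union>k. B k)"
    proof
      fix \<omega> assume \<omega>: "\<omega> \<in> Om - {\<omega> \<in> Om. hausdorff_measure h (F \<omega>) = 0}"
      show "\<omega> \<in> (\<Union>k. B k)"
      proof (rule ccontr)
        assume "\<omega> \<notin> (\<Union>k. B k)"
        then have lt: "hausdorff_pre h 2 (F \<omega>) < ennreal (1 / real (Suc k))" for k
          using \<omega> by (auto simp: B_def)
        have "hausdorff_pre h 2 (F \<omega>) \<le> 0"
        proof (rule ennreal_le_epsilon)
          fix e :: real assume e: "0 < e"
          obtain k :: nat where k: "k > 0" "inverse (real k) < e" using ex_inverse_of_nat_less[OF e] by auto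
          have "1 / real (Suc k) \<le> inverse (real k)" using k(1) by (simp add: field_simps)
          then have "ennreal (1 / real (Suc k)) \<le> ennreal e" using k(2) by (intro ennreal_leI) linarith
          then show "hausdorff_pre h 2 (F \<omega>) \<le> 0 + ennreal e" using lt[of k] by simp
        qed
        then have "hausdorff_pre h 2 (F \<omega>) = 0" by simp
        then have "hausdorff_measure h (F \<omega>) = 0" by (rule hp_zero_H_zero[OF _ h])
        then show False using \<omega> by blast
      qed
    qed
  next
    fix k \<omega> n assume \<omega>: "\<omega> \<in> Om"
    define t where "t = 1 / real (Suc k)"
    have t: "0 < t" "t \<le> 1" by (auto simp: t_def)
    let ?W = "words I \<omega> n"
    define c where "c = card ?W"
    have c: "0 < c" using words_fin[OF \<omega>] words_nonempty[OF \<omega>] by (auto simp: c_def card_gt_0_iff)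
    have "(INF u\<in>Om. hausdorff_measure h (F u)) < ennreal (t / real c)" using c0 t c by simp
    then obtain u where u: "u \<in> Om" "hausdorff_measure h (F u) < ennreal (t / real c)"
      by (auto simp: INF_less_iff)
    define \<omega>' where "\<omega>' = pre \<omega> n u"
    have \<omega>': "\<omega>' \<in> Om" using pre_Om[OF \<omega> u(1)] by (simp add: \<omega>'_def)
    have agree: "\<And>i. i < n \<Longrightarrow> \<omega>' i = \<omega> i" by (simp add: \<omega>'_def pre_below)
    have W': "words I \<omega>' n = ?W" by (rule words_cong) (use agree in auto)
    have "hausdorff_measure h (F \<omega>') \<le> of_nat c * hausdorff_measure h (F (sh n \<omega>'))"
      using H_upper[OF \<omega>' h, of n] W' by (simp add: c_def)
    also have "sh n \<omega>' = u" by (simp add: \<omega>'_def pre_sh)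
    also have "of_nat c * hausdorff_measure h (F u) < of_nat c * ennreal (t / real c)"
      using u(2) c by (intro ennreal_mult_strict_left_mono) (auto simp: ennreal_of_nat_eq_real_of_nat)
    also have "of_nat c * ennreal (t / real c) = ennreal t"
      using c t by (simp add: ennreal_of_nat_eq_real_of_nat ennreal_mult[symmetric])
    finally have Hlt: "hausdorff_measure h (F \<omega>') < ennreal t" .
    have "hausdorff_pre h 1 (F \<omega>') < ennreal t"
      using hp_le_H[of 1 h "F \<omega>'"] Hlt by simp
    then obtain U where U: "F \<omega>' \<subseteq> (\<Union>i. U i)" "\<And>i. bounded (U i)" "\<And>i. diameter (U i) \<le> 1"
      "(\<Sum>i. hterm h (U i)) < ennreal t"
      by (elim hp_less_ex) blast
    obtain r where r: "(\<Sum>i. hterm h (U i)) = ennreal r" "0 \<le> r" "r < t"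
    proof -
      have "(\<Sum>i. hterm h (U i)) < top" using U(4) by (simp add: order_less_le_trans)
      then obtain r where "(\<Sum>i. hterm h (U i)) = ennreal r" "0 \<le> r"
        by (cases "(\<Sum>i. hterm h (U i))" rule: ennreal_cases) auto
      moreover then have "r < t" using U(4) t by (simp add: ennreal_less_iff)
      ultimately show ?thesis using that by blast
    qed
    define e where "e = (t - r) / 2"
    have e: "0 < e" "e \<le> 1" "r + e < t" using r(2,3) t unfolding e_def by (auto simp: field_simps)
    obtain W where W: "\<And>i. open (W i)" "\<And>i. U i \<subseteq> W i" "\<And>i. bounded (W i)"
      "\<And>i. diameter (W i) \<le> 1 + e" "(\<Sum>i. hterm h (W i)) \<le> (\<Sum>i. hterm h (U i)) + ennreal e"
      by (rule enlarge[where U=U, OF U(2,3) e(1) h]) blast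
    define G where "G = (\<Union>i. W i)"
    have "open G" using W(1) by (auto simp: G_def)
    have FG: "F \<omega>' \<subseteq> G" using U(1) W(2) unfolding G_def by blast
    have sumW: "(\<Sum>i. hterm h (W i)) < ennreal t"
    proof -
      have "(\<Sum>i. hterm h (W i)) \<le> ennreal r + ennreal e" using W(5) r(1) by simp
      also have "\<dots> = ennreal (r + e)" using r e by (simp add: ennreal_plus)
      also have "\<dots> < ennreal t" using e r by (intro ennreal_lessI) auto
      finally show ?thesis .
    qed
    have "F \<omega>' \<inter> (- G) = {}" using FG by blast
    then obtain d where d: "0 < d" "\<And>x y. x \<in> F \<omega>' \<Longrightarrow> y \<in> - G \<Longrightarrow> d \<le> dist x y"
      using compact_closed_sep[OF F_compact[OF \<omega>'], of "- G"] \<open>open G\<close> by (auto simp: closed_Compl)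
    have inG: "x \<in> G" if "y \<in> F \<omega>'" "dist x y < d" for x y
      using d(2)[OF that(1), of x] that(2) by (auto simp: dist_commute)
    define D where "D = diameter K"
    have D: "0 \<le> D" unfolding D_def by (rule diameter_ge_0[OF compact_imp_bounded[OF K]])
    obtain n0 where n0: "\<And>m. m \<ge> n0 \<Longrightarrow> lam^m < d / (D + 1)"
      using pow_small[OF lam_nonneg lam_less1, of "d / (D + 1)"] d D by auto
    define m where "m = max n n0"
    have lamD: "lam^m * D < d"
    proof -
      have "lam^m < d / (D + 1)" using n0[of m] by (simp add: m_def)
      then have "lam^m * (D + 1) < d" using D by (simp add: field_simps)
      moreover have "lam^m * D \<le> lam^m * (D + 1)" using lam_nonneg by (intro mult_left_mono) auto
      ultimately show ?thesis by linarith
    qed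
    show "\<exists>\<omega>'\<in>Om. \<exists>m\<ge>n. (\<forall>i<n. \<omega>' i = \<omega> i) \<and> (\<forall>v\<in>cyl N \<omega>' m. v \<notin> B k)"
    proof (intro bexI[OF _ \<omega>'] exI[of _ m] conjI allI impI ballI)
      show "m \<ge> n" by (simp add: m_def)
      show "\<And>i. i < n \<Longrightarrow> \<omega>' i = \<omega> i" by (rule agree)
      fix v assume v: "v \<in> cyl N \<omega>' m"
      then have vO: "v \<in> Om" and va: "\<And>i. i < m \<Longrightarrow> v i = \<omega>' i" by (auto simp: cyl_def)
      have "F v \<subseteq> G"
      proof
        fix x assume "x \<in> F v"
        then have "x \<in> lev \<omega>' m" using F_sub_lev[of v m] lev_agree[OF va] by auto
        then obtain j z where jz: "j \<in> words I \<omega>' m" "z \<in> K" "x = wcomp S \<omega>' j m z"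
          unfolding lev_def by blast
        obtain y where y: "y \<in> F \<omega>'" "y \<in> wcomp S \<omega>' j m ` K" using piece_meets[OF \<omega>' jz(1)] by blast
        have "dist x y \<le> lam^m * D" unfolding D_def
          by (rule piece_diam[OF \<omega>' jz(1)]) (use jz y in auto)
        then have "dist x y < d" using lamD by linarith
        then show "x \<in> G" using inG[OF y(1)] by blast
      qed
      then have "hausdorff_pre h 2 (F v) \<le> hausdorff_pre h 2 G" by (rule hp_mono)
      also have "\<dots> \<le> (\<Sum>i. hterm h (W i))"
      proof (rule hp_le)
        show "G \<subseteq> (\<Union>i. W i)" by (simp add: G_def)
        show "bounded (W i)" for i by (rule W(3))
        show "diameter (W i) \<le> 2" for i using W(4)[of i] e(2) by linarith
      qed
      also have "\<dots> < ennreal t" by (rule sumW)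
      finally show "v \<notin> B k" by (simp add: B_def t_def)
    qed
  qed
qed

lemma part2:
  assumes h: "0 \<le> h"
    and sep: "\<And>\<omega> l i j. \<omega> \<in> Om \<Longrightarrow> l \<in> {1..N} \<Longrightarrow> i \<in> I l \<Longrightarrow> j \<in> I l \<Longrightarrow> i \<noteq> j \<Longrightarrow>
        hausdorff_measure h (S l i ` F \<omega> \<inter> S l j ` F \<omega>) = 0"
    and v: "v \<in> Om"
    and lim: "filterlim (\<lambda>l. \<Sum>j \<in> words I v l. lip_lower K (wcomp S v j l) powr h) at_top sequentially"
    and cpos: "(INF u\<in>Om. hausdorff_measure h (F u)) > 0"
  shows "residual (omega_top N) {\<omega> \<in> Om. hausdorff_measure h (F \<omega>) = \<infinity>}"
proof -
  obtain c' :: real where c': "0 < c'" "\<And>u. u \<in> Om \<Longrightarrow> ennreal c' \<le> hausdorff_measure h (F u)"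
  proof -
    obtain x :: ennreal where x: "0 < x" "x < (INF u\<in>Om. hausdorff_measure h (F u))"
      using dense[OF cpos] by blast
    then have "x < top" using top_greatest order_less_le_trans by blast
    then obtain c where cx: "x = ennreal c" "0 \<le> c" by (cases x rule: ennreal_cases) auto
    then have "0 < c" using x(1) by simp
    moreover have "ennreal c \<le> hausdorff_measure h (F u)" if "u \<in> Om" for u
      using x(2) cx INF_lower[OF that, of "\<lambda>u. hausdorff_measure h (F u)"] by simp
    ultimately show ?thesis using that by blast
  qed
  define B where "B M = {\<omega> \<in> Om. hausdorff_measure h (F \<omega>) < ennreal (real M)}" for M :: nat
  define s where "s l = (\<Sum>j \<in> words I v l. lip_lower K (wcomp S v j l) powr h)" for l
  have s0: "0 \<le> s l" for l unfolding s_def by (intro sum_nonneg) simp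
  show ?thesis
  proof (rule residual_omega[of _ N B])
    show "{\<omega> \<in> Om. hausdorff_measure h (F \<omega>) = \<infinity>} \<subseteq> Om" by blast
    show "B k \<subseteq> Om" for k by (auto simp: B_def)
    show "Om - {\<omega> \<in> Om. hausdorff_measure h (F \<omega>) = \<infinity>} \<subseteq> (\<Union>k. B k)"
    proof
      fix \<omega> assume \<omega>: "\<omega> \<in> Om - {\<omega> \<in> Om. hausdorff_measure h (F \<omega>) = \<infinity>}"
      then have "hausdorff_measure h (F \<omega>) \<noteq> top" by simp
      then obtain r where r: "hausdorff_measure h (F \<omega>) = ennreal r" "0 \<le> r"
        by (cases "hausdorff_measure h (F \<omega>)" rule: ennreal_cases) auto
      define M where "M = nat \<lceil>r\<rceil> + 1"
      have "r \<le> real (nat \<lceil>r\<rceil>)" by linarith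
      then have "r < real M" unfolding M_def by simp
      then have "\<omega> \<in> B M" using \<omega> r by (auto simp: B_def intro!: ennreal_lessI)
      then show "\<omega> \<in> (\<Union>k. B k)" by blast
    qed
  next
    fix M \<omega> n assume \<omega>: "\<omega> \<in> Om"
    define \<omega>' where "\<omega>' = pre \<omega> n v"
    have \<omega>': "\<omega>' \<in> Om" using pre_Om[OF \<omega> v] by (simp add: \<omega>'_def)
    have agree: "\<And>i. i < n \<Longrightarrow> \<omega>' i = \<omega> i" by (simp add: \<omega>'_def pre_below)
    obtain j0 where j0: "j0 \<in> words I \<omega>' n" using words_nonempty[OF \<omega>'] by blast
    define a where "a = lip_lower K (wcomp S \<omega>' j0 n) powr h"
    have a: "0 < a" using wcomp_lower[where k=n, OF \<omega>' words_D[OF j0]] by (simp add: a_def)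
    have "eventually (\<lambda>l. real M / (a * c') \<le> s l) sequentially"
      using lim unfolding filterlim_at_top s_def by blast
    then obtain l where l: "real M / (a * c') \<le> s l" by (auto simp: eventually_sequentially)
    define m where "m = n + l"
    show "\<exists>\<omega>'\<in>Om. \<exists>m\<ge>n. (\<forall>i<n. \<omega>' i = \<omega> i) \<and> (\<forall>v\<in>cyl N \<omega>' m. v \<notin> B M)"
    proof (intro bexI[OF _ \<omega>'] exI[of _ m] conjI allI impI ballI)
      show "m \<ge> n" by (simp add: m_def)
      show "\<And>i. i < n \<Longrightarrow> \<omega>' i = \<omega> i" by (rule agree)
      fix w assume w: "w \<in> cyl N \<omega>' m"
      then have wO: "w \<in> Om" and wa: "\<And>i. i < m \<Longrightarrow> w i = \<omega>' i" by (auto simp: cyl_def)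
      have Ww: "words I w n = words I \<omega>' n" by (rule words_cong) (use wa in \<open>auto simp: m_def\<close>)
      have wc: "wcomp S w j0 n = wcomp S \<omega>' j0 n" by (rule wcomp_cong) (use wa in \<open>auto simp: m_def\<close>)
      have step1: "ennreal a * hausdorff_measure h (F (sh n w)) \<le> hausdorff_measure h (F w)"
      proof -
        have "ennreal a \<le> (\<Sum>j\<in>words I w n. ennreal (lip_lower K (wcomp S w j n) powr h))"
          using member_le_sum[of j0 "words I w n" "\<lambda>j. ennreal (lip_lower K (wcomp S w j n) powr h)"]
            j0 Ww wc words_fin[OF wO] words_fin[OF \<omega>'] by (simp add: a_def)
        then have "ennreal a * hausdorff_measure h (F (sh n w))
            \<le> (\<Sum>j\<in>words I w n. ennreal (lip_lower K (wcomp S w j n) powr h)) * hausdorff_measure h (F (sh n w))"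
          by (rule mult_right_mono) simp
        also have "\<dots> \<le> hausdorff_measure h (F w)" by (rule H_lower[OF wO h sep])
        finally show ?thesis .
      qed
      define w2 where "w2 = sh n w"
      have w2: "w2 \<in> Om" using Om_sh[OF wO] by (simp add: w2_def)
      have w2a: "w2 i = v i" if "i < l" for i
      proof -
        have "w2 i = \<omega>' (n + i)" using wa[of "n+i"] that by (simp add: w2_def m_def)
        also have "\<dots> = v i" by (simp add: \<omega>'_def pre_def)
        finally show ?thesis .
      qed
      have Wv: "words I w2 l = words I v l" by (rule words_cong) (use w2a in auto)
      have wcv: "wcomp S w2 j l = wcomp S v j l" for j by (rule wcomp_cong) (use w2a in auto)
      have step2: "ennreal (s l) * ennreal c' \<le> hausdorff_measure h (F w2)"
      proof -
        have "(\<Sum>j\<in>words I w2 l. ennreal (lip_lower K (wcomp S w2 j l) powr h)) = ennreal (s l)"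
          unfolding Wv wcv s_def by (rule sum_ennreal) simp
        then have "ennreal (s l) * hausdorff_measure h (F (sh l w2)) \<le> hausdorff_measure h (F w2)"
          using H_lower[OF w2 h sep, of l] by simp
        moreover have "ennreal c' \<le> hausdorff_measure h (F (sh l w2))" by (rule c'(2)[OF Om_sh[OF w2]])
        ultimately show ?thesis by (meson mult_left_mono order_trans zero_le)
      qed
      have "ennreal (real M) \<le> ennreal (a * s l * c')"
      proof (rule ennreal_leI)
        have "real M / (a * c') \<le> s l" by (rule l)
        then have "real M \<le> s l * (a * c')" using a c' by (simp add: field_simps)
        then show "real M \<le> a * s l * c'" by (simp add: mult_ac)
      qed
      also have "\<dots> = ennreal a * (ennreal (s l) * ennreal c')"
        using a s0[of l] c' by (simp add: ennreal_mult mult.assoc)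
      also have "\<dots> \<le> ennreal a * hausdorff_measure h (F w2)" by (rule mult_left_mono[OF step2]) simp
      also have "\<dots> \<le> hausdorff_measure h (F w)" using step1 by (simp add: w2_def)
      finally show "w \<notin> B M" by (auto simp: B_def not_less)
    qed
  qed
qed

end

theorem theorem2p2:
  fixes K :: "'a::metric_space set"
    and N :: nat
    and I :: "nat \<Rightarrow> nat set"
    and S :: "nat \<Rightarrow> nat \<Rightarrow> 'a \<Rightarrow> 'a"
    and h :: real
  assumes K: "compact K"
    and N: "N \<ge> 1"
    and I: "\<And>l. l \<in> {1..N} \<Longrightarrow> finite (I l) \<and> I l \<noteq> {}"
    and S_maps: "\<And>l i. l \<in> {1..N} \<Longrightarrow> i \<in> I l \<Longrightarrow> S l i ` K \<subseteq> K"
    and S_bilip: "\<And>l i. l \<in> {1..N} \<Longrightarrow> i \<in> I l \<Longrightarrow>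
        0 < lip_lower K (S l i) \<and> ereal (lip_lower K (S l i)) \<le> lip_upper K (S l i)
        \<and> lip_upper K (S l i) < 1"
    and h_def: "h = real_of_ereal (INF u \<in> omega_space N. hausdorff_dim (rattractor K I S u))"
    and sep: "\<And>\<omega> l i j. \<omega> \<in> omega_space N \<Longrightarrow> l \<in> {1..N} \<Longrightarrow> i \<in> I l \<Longrightarrow> j \<in> I l \<Longrightarrow> i \<noteq> j \<Longrightarrow>
        hausdorff_measure h (S l i ` rattractor K I S \<omega> \<inter> S l j ` rattractor K I S \<omega>) = 0"
    and v: "\<exists>v \<in> omega_space N.
        filterlim (\<lambda>l. \<Sum>j \<in> words I v l. lip_lower K (wcomp S v j l) powr h) at_top sequentially"
  shows "((INF u \<in> omega_space N. hausdorff_measure h (rattractor K I S u)) = 0 \<longrightarrow>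
            residual (omega_top N) {\<omega> \<in> omega_space N. hausdorff_measure h (rattractor K I S \<omega>) = 0})
       \<and> ((INF u \<in> omega_space N. hausdorff_measure h (rattractor K I S u)) > 0 \<longrightarrow>
            residual (omega_top N) {\<omega> \<in> omega_space N. hausdorff_measure h (rattractor K I S \<omega>) = \<infinity>})"
proof -
  interpret rifs K N I S by (rule rifs.intro[OF K N I S_maps S_bilip])
  have h0: "0 \<le> h"
  proof -
    have "0 \<le> hausdorff_dim A" for A :: "'a set"
      unfolding hausdorff_dim_def by (rule Inf_greatest) auto
    then have "0 \<le> (INF u\<in>omega_space N. hausdorff_dim (rattractor K I S u))" by (intro INF_greatest)
    then show ?thesis unfolding h_def by (rule real_of_ereal_pos)
  qed
  obtain w where w: "w \<in> omega_space N"
    "filterlim (\<lambda>l. \<Sum>j \<in> words I w l. lip_lower K (wcomp S w j l) powr h) at_top sequentially"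
    using v by blast
  show ?thesis using part1[OF h0] part2[OF h0 sep w(1) w(2)] by blast
qed

end
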